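(* Let $(B,\alpha_B)$ and $(H,\alpha_H)$ be Hom-coalgebras whose structure maps are morphisms in $\overline{\mathcal H}^{i,j}(Vec_\Bbbk)$ (in particular $\alpha_B,\alpha_H$ bijective), and let $\varphi:B\otimes H\to H\otimes B$, $\varphi(b\otimes h)=\sum h^\varphi\otimes b^\varphi$, be linear with $\varphi\circ(\alpha_B\otimes\alpha_H)=(\alpha_H\otimes\alpha_B)\circ\varphi$. For $n\in\mathbb Z$ define $\ddot\varphi(n)_X:(X\otimes B)\otimes H\to(X\otimes H)\otimes B$, $(x\otimes b)\otimes h\mapsto\sum(x\otimes\alpha_H(h)^\varphi)\otimes\alpha_B^n\big((\alpha_B^{-n-1}(b))^\varphi\big)$ (where $\varphi$ is applied to $\alpha_B^{-n-1}(b)\otimes\alpha_H(h)$). Then $\ddot\varphi(n):\ddot H\ddot B\to\ddot B\ddot H$ is a comonad distributive law if and only if for all $b\in B$, $h\in H$: (M1) $((\varphi\otimes\mathrm{id}_B)\circ(\mathrm{id}_B\otimes\varphi))(\Delta_B(b)\otimes\alpha_H(h))=(\alpha_H\otimes\Delta_B)(\varphi(b\otimes h))$; (M2) $((\mathrm{id}_H\otimes\varphi)\circ(\varphi\otimes\mathrm{id}_H))(\alpha_B(b)\otimes\Delta_H(h))=(\Delta_H\otimes\alpha_B)(\varphi(b\otimes h))$; (M3) $(\varepsilon_H\otimes\mathrm{id}_B)(\varphi(b\otimes h))=\varepsilon_H(h)b$; (M4) $(\mathrm{id}_H\otimes\varepsilon_B)(\varphi(b\otimes h))=\varepsilon_B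(b)h$.
   Context: $\Bbbk$ is a field of characteristic $0$; all vector spaces finite-dimensional; $i,j$ fixed integers. $\overline{\mathcal H}^{i,j}(Vec_\Bbbk)$: objects $(X,\alpha_X)$ with $\alpha_X$ a linear automorphism; morphisms linear maps commuting with the $\alpha$'s; tensor $(X\otimes Y,\alpha_X\otimes\alpha_Y)$, unit $(\Bbbk,\mathrm{id})$; $a_{X,Y,Z}((x\otimes y)\otimes z)=\alpha_X^{i+1}(x)\otimes(y\otimes\alpha_Z^{-j-1}(z))$, $l_X(\lambda\otimes x)=\lambda\alpha_X^{j+1}(x)$, $r_X(x\otimes\lambda)=\lambda\alpha_X^{i+1}(x)$. Hom-coalgebra $(C,\alpha,\Delta,\varepsilon)$: $\varepsilon\alpha=\varepsilon$, $\alpha(c_1)\otimes\Delta(c_2)=\Delta(c_1)\otimes\alpha(c_2)$, $\varepsilon(c_1)c_2=c_1\varepsilon(c_2)=\alpha(c)$. For a Hom-coalgebra $C$, $\ddot C=-\otimes C$ is the comonad on $\overline{\mathcal H}^{i,j}(Vec_\Bbbk)$ with comultiplication $x\otimes c\mapsto(\alpha_X(x)\otimes c_1)\otimes\alpha_C^{-1}(c_2)$ and counit $x\otimes c\mapsto\varepsilon_C(c)\alpha_X^{-1}(x)$. A comonad distributive law between comonads $(F,\Delta,\varepsilon)$ and $(G,\delta,\epsilon)$ is a natural $\psi:FG\to GF$ with $G\psi\circ\psi G\circ F\delta=\delta F\circ\psi$, $\psi F\circ F\psi\circ\Delta G=G\Delta\circ\psi$, $G\varepsilon\circ\psi=\varepsilon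 G$, $\epsilon F\circ\psi=F\epsilon$. *)

theory Defs
  imports Main
begin

text \<open>A universe of basis indices closed under pairing: every finite-dimensional
  space is (isomorphic to) 'k^I for a finite index set I, and the tensor
  product of 'k^I and 'k^J is 'k^(I x J), indexed by Tn i j.\<close>

datatype ix = Ix nat | Tn ix ix

type_synonym 'k vec = "ix \<Rightarrow> 'k"

definition space :: "ix set \<Rightarrow> ('k::zero) vec set" where
  "space I = {v. \<forall>t. t \<notin> I \<longrightarrow> v t = 0}"

definition tidx :: "ix set \<Rightarrow> ix set \<Rightarrow> ix set" where
  "tidx I J = {Tn i j | i j. i \<in> I \<and> j \<in> J}"

definition vadd :: "('k::plus) vec \<Rightarrow> 'k vec \<Rightarrow> 'k vec" where
  "vadd v w = (\<lambda>t. v t + w t)"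

definition smul :: "'k::times \<Rightarrow> 'k vec \<Rightarrow> 'k vec" where
  "smul c v = (\<lambda>t. c * v t)"

definition bv :: "ix \<Rightarrow> ('k::{zero,one}) vec" where
  "bv i = (\<lambda>t. if t = i then 1 else 0)"

definition tvec :: "('k::{times,zero}) vec \<Rightarrow> 'k vec \<Rightarrow> 'k vec" where
  "tvec v w = (\<lambda>t. case t of Tn i j \<Rightarrow> v i * w j | Ix _ \<Rightarrow> 0)"

definition assocL :: "('k::zero) vec \<Rightarrow> 'k vec" where
  "assocL v = (\<lambda>t. case t of Tn (Tn i j) k \<Rightarrow> v (Tn i (Tn j k)) | _ \<Rightarrow> 0)"

definition assocR :: "('k::zero) vec \<Rightarrow> 'k vec" where
  "assocR v = (\<lambda>t. case t of Tn i (Tn j k) \<Rightarrow> v (Tn (Tn i j) k) | _ \<Rightarrow> 0)"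

definition lin2 :: "ix set \<Rightarrow> ix set \<Rightarrow> (('k::comm_ring_1) vec \<Rightarrow> 'k vec \<Rightarrow> 'k vec)
    \<Rightarrow> 'k vec \<Rightarrow> 'k vec" where
  "lin2 I J g w = (\<lambda>t. \<Sum>p\<in>I \<times> J. w (Tn (fst p) (snd p)) * g (bv (fst p)) (bv (snd p)) t)"

definition lin3 :: "ix set \<Rightarrow> ix set \<Rightarrow> ix set
    \<Rightarrow> (('k::comm_ring_1) vec \<Rightarrow> 'k vec \<Rightarrow> 'k vec \<Rightarrow> 'k vec) \<Rightarrow> 'k vec \<Rightarrow> 'k vec" where
  "lin3 I J K g w = (\<lambda>t. \<Sum>p\<in>I \<times> J \<times> K.
      w (Tn (Tn (fst p) (fst (snd p))) (snd (snd p))) *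
      g (bv (fst p)) (bv (fst (snd p))) (bv (snd (snd p))) t)"

definition tmap :: "ix set \<Rightarrow> ix set \<Rightarrow> (('k::comm_ring_1) vec \<Rightarrow> 'k vec)
    \<Rightarrow> ('k vec \<Rightarrow> 'k vec) \<Rightarrow> 'k vec \<Rightarrow> 'k vec" where
  "tmap I J f g = lin2 I J (\<lambda>x y. tvec (f x) (g y))"

definition zpow :: "ix set \<Rightarrow> (('k::zero) vec \<Rightarrow> 'k vec) \<Rightarrow> int \<Rightarrow> 'k vec \<Rightarrow> 'k vec" where
  "zpow I f n = (if 0 \<le> n then f ^^ nat n else inv_into (space I) f ^^ nat (- n))"

definition lin_on :: "ix set \<Rightarrow> ix set \<Rightarrow> (('k::comm_ring_1) vec \<Rightarrow> 'k vec) \<Rightarrow> bool" where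
  "lin_on I J f \<longleftrightarrow> (\<forall>v\<in>space I. f v \<in> space J)
     \<and> (\<forall>v\<in>space I. \<forall>w\<in>space I. f (vadd v w) = vadd (f v) (f w))
     \<and> (\<forall>c. \<forall>v\<in>space I. f (smul c v) = smul c (f v))"

definition lin_functional :: "ix set \<Rightarrow> (('k::comm_ring_1) vec \<Rightarrow> 'k) \<Rightarrow> bool" where
  "lin_functional I e \<longleftrightarrow>
       (\<forall>v\<in>space I. \<forall>w\<in>space I. e (vadd v w) = e v + e w)
     \<and> (\<forall>c. \<forall>v\<in>space I. e (smul c v) = c * e v)"

text \<open>Objects (X, alpha_X) of the category H^{i,j}(Vec_k): X = 'k^I, I finite,
  alpha_X a linear automorphism.  Morphisms: linear maps commuting with the alphas.\<close>
definition is_obj :: "ix set \<Rightarrow> (('k::comm_ring_1) vec \<Rightarrow> 'k vec) \<Rightarrow> bool" where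
  "is_obj I a \<longleftrightarrow> finite I \<and> lin_on I I a \<and> bij_betw a (space I) (space I)"

definition is_hom :: "ix set \<Rightarrow> (('k::comm_ring_1) vec \<Rightarrow> 'k vec) \<Rightarrow> ix set
    \<Rightarrow> ('k vec \<Rightarrow> 'k vec) \<Rightarrow> ('k vec \<Rightarrow> 'k vec) \<Rightarrow> bool" where
  "is_hom I a J b f \<longleftrightarrow> lin_on I J f \<and> (\<forall>v\<in>space I. f (a v) = b (f v))"

definition hom_coalgebra :: "ix set \<Rightarrow> (('k::comm_ring_1) vec \<Rightarrow> 'k vec)
    \<Rightarrow> ('k vec \<Rightarrow> 'k vec) \<Rightarrow> ('k vec \<Rightarrow> 'k) \<Rightarrow> bool" where
  "hom_coalgebra C a D e \<longleftrightarrow>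
     is_obj C a
   \<and> lin_on C (tidx C C) D
   \<and> lin_functional C e
   \<and> (\<forall>c\<in>space C. D (a c) = tmap C C a a (D c))
   \<and> (\<forall>c\<in>space C. e (a c) = e c)
   \<and> (\<forall>c\<in>space C. assocL (tmap C (tidx C C) a D (D c)) = tmap (tidx C C) C D a (D c))
   \<and> (\<forall>c\<in>space C. lin2 C C (\<lambda>x y. smul (e x) y) (D c) = a c)
   \<and> (\<forall>c\<in>space C. lin2 C C (\<lambda>x y. smul (e y) x) (D c) = a c)"

text \<open>The comonad C-double-dot = - (x) C: comultiplication and counit at object (X = 'k^I, a).
  x (x) c |-> (a x (x) c_1) (x) alpha_C^{-1}(c_2), and x (x) c |-> eps(c) a^{-1}(x).
  On objects: (I, a) |-> (tidx I C, tmap I C a alpha_C); on morphisms f |-> tmap I C f id.\<close>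
definition ccomult :: "ix set \<Rightarrow> (('k::comm_ring_1) vec \<Rightarrow> 'k vec) \<Rightarrow> ('k vec \<Rightarrow> 'k vec)
    \<Rightarrow> ix set \<Rightarrow> ('k vec \<Rightarrow> 'k vec) \<Rightarrow> 'k vec \<Rightarrow> 'k vec" where
  "ccomult C aC D I a = lin2 I C (\<lambda>x c. assocL (tvec (a x) (tmap C C id (inv_into (space C) aC) (D c))))"

definition ccounit :: "ix set \<Rightarrow> (('k::comm_ring_1) vec \<Rightarrow> 'k)
    \<Rightarrow> ix set \<Rightarrow> ('k vec \<Rightarrow> 'k vec) \<Rightarrow> 'k vec \<Rightarrow> 'k vec" where
  "ccounit C e I a = lin2 I C (\<lambda>x c. smul (e c) (inv_into (space I) a x))"

text \<open>Comonad distributive law Psi : F G -> G F for F = H-double-dot, G = B-double-dot,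
  written out componentwise. Psi I a is the component at the object (k^I, a).\<close>
definition distr_law :: "ix set \<Rightarrow> (('k::comm_ring_1) vec \<Rightarrow> 'k vec) \<Rightarrow> ('k vec \<Rightarrow> 'k vec)
    \<Rightarrow> ('k vec \<Rightarrow> 'k) \<Rightarrow> ix set \<Rightarrow> ('k vec \<Rightarrow> 'k vec) \<Rightarrow> ('k vec \<Rightarrow> 'k vec) \<Rightarrow> ('k vec \<Rightarrow> 'k)
    \<Rightarrow> (ix set \<Rightarrow> ('k vec \<Rightarrow> 'k vec) \<Rightarrow> 'k vec \<Rightarrow> 'k vec) \<Rightarrow> bool" where
  "distr_law IH aH DH eH IB aB DB eB Psi \<longleftrightarrow>
     \<comment> \<open>each component is a morphism FGX -> GFX of the category\<close>
     (\<forall>I a. is_obj I a \<longrightarrow>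
        is_hom (tidx (tidx I IB) IH) (tmap (tidx I IB) IH (tmap I IB a aB) aH)
               (tidx (tidx I IH) IB) (tmap (tidx I IH) IB (tmap I IH a aH) aB) (Psi I a))
   \<and> \<comment> \<open>naturality\<close>
     (\<forall>I a J b f. is_obj I a \<longrightarrow> is_obj J b \<longrightarrow> is_hom I a J b f \<longrightarrow>
        (\<forall>w\<in>space (tidx (tidx I IB) IH).
           Psi J b (tmap (tidx I IB) IH (tmap I IB f id) id w)
           = tmap (tidx I IH) IB (tmap I IH f id) id (Psi I a w)))
   \<and> \<comment> \<open>the four axioms\<close>
     (\<forall>I a. is_obj I a \<longrightarrow>
        (let XB = tidx I IB; aXB = tmap I IB a aB; XH = tidx I IH; aXH = tmap I IH a aH
         in \<forall>w\<in>space (tidx XB IH).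
              tmap (tidx XB IH) IB (Psi I a) id
                 (Psi XB aXB (tmap XB IH (ccomult IB aB DB I a) id w))
                = ccomult IB aB DB XH aXH (Psi I a w)
            \<and> Psi XH aXH (tmap (tidx XB IH) IH (Psi I a) id (ccomult IH aH DH XB aXB w))
                = tmap XH IB (ccomult IH aH DH I a) id (Psi I a w)
            \<and> tmap XH IB (ccounit IH eH I a) id (Psi I a w) = ccounit IH eH XB aXB w
            \<and> ccounit IB eB XH aXH (Psi I a w) = tmap XB IH (ccounit IB eB I a) id w))"

definition psi_n :: "ix set \<Rightarrow> (('k::comm_ring_1) vec \<Rightarrow> 'k vec) \<Rightarrow> ix set \<Rightarrow> ('k vec \<Rightarrow> 'k vec)
    \<Rightarrow> ('k vec \<Rightarrow> 'k vec) \<Rightarrow> int \<Rightarrow> ix set \<Rightarrow> ('k vec \<Rightarrow> 'k vec) \<Rightarrow> 'k vec \<Rightarrow> 'k vec" where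
  "psi_n IB aB IH aH phi n I a = lin3 I IB IH (\<lambda>x b h.
      assocL (tvec x (tmap IH IB id (zpow IB aB n)
                        (phi (tvec (zpow IB aB (- n - 1) b) (aH h))))))"

end

theory Submission
  imports Defs
begin

definition linear_on :: "ix set \<Rightarrow> (('k::comm_ring_1) vec \<Rightarrow> 'k vec) \<Rightarrow> bool" where
  "linear_on I f \<longleftrightarrow> (\<forall>v\<in>space I. \<forall>w\<in>space I. f (vadd v w) = vadd (f v) (f w))
     \<and> (\<forall>c. \<forall>v\<in>space I. f (smul c v) = smul c (f v))"

lemma lin_on_linear: "lin_on I J f \<Longrightarrow> linear_on I f"
  by (simp add: lin_on_def linear_on_def)

lemma lin_onD: "lin_on I J f \<Longrightarrow> v \<in> space I \<Longrightarrow> f v \<in> space J"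
  by (simp add: lin_on_def)

lemma space_zero[simp]: "(\<lambda>_. 0::'k::comm_ring_1) \<in> space I"
  by (simp add: space_def)

lemma vadd_space[simp]: "(v::'k::comm_ring_1 vec) \<in> space I \<Longrightarrow> w \<in> space I \<Longrightarrow> vadd v w \<in> space I"
  by (simp add: space_def vadd_def)

lemma smul_space[simp]: "(v::'k::comm_ring_1 vec) \<in> space I \<Longrightarrow> smul c v \<in> space I"
  by (simp add: space_def smul_def)

lemma bv_space[simp]: "i \<in> I \<Longrightarrow> (bv i :: 'k::comm_ring_1 vec) \<in> space I"
  by (simp add: space_def bv_def)

lemma tvec_space[simp]: "(u::'k::comm_ring_1 vec) \<in> space I \<Longrightarrow> v \<in> space J \<Longrightarrow> tvec u v \<in> space (tidx I J)"
  by (auto simp: space_def tvec_def tidx_def split: ix.split)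

lemma bv_Tn: "(bv (Tn i j) :: 'k::comm_ring_1 vec) = tvec (bv i) (bv j)"
  by (auto simp: bv_def tvec_def fun_eq_iff split: ix.split)

lemma tidx_img: "tidx I J = (\<lambda>p. Tn (fst p) (snd p)) ` (I \<times> J)"
  by (auto simp: tidx_def image_def)

lemma finite_tidx[simp]: "finite I \<Longrightarrow> finite J \<Longrightarrow> finite (tidx I J)"
  by (simp add: tidx_img)

lemma Tn_in_tidx[simp]: "Tn i j \<in> tidx I J \<longleftrightarrow> i \<in> I \<and> j \<in> J"
  by (simp add: tidx_def)

lemma Ix_notin_tidx[simp]: "Ix m \<notin> tidx I J"
  by (simp add: tidx_def)

lemma linear_zero: "linear_on I f \<Longrightarrow> f (\<lambda>_. 0) = (\<lambda>_. 0)"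
proof -
  assume "linear_on I f"
  then have "f (smul 0 (\<lambda>_. 0)) = smul 0 (f (\<lambda>_. 0))" by (simp add: linear_on_def)
  then show ?thesis by (simp add: smul_def)
qed

lemma expand_space:
  assumes "finite I" "(v::'k::comm_ring_1 vec) \<in> space I"
  shows "v = (\<lambda>t. \<Sum>i\<in>I. v i * bv i t)"
proof
  fix t
  show "v t = (\<Sum>i\<in>I. v i * bv i t)"
  proof (cases "t \<in> I")
    case True
    have "(\<Sum>i\<in>I. v i * bv i t) = (\<Sum>i\<in>I. if i = t then v t else 0)"
      by (intro sum.cong) (auto simp: bv_def)
    then show ?thesis using assms True by simp
  next
    case False
    then show ?thesis using assms by (auto simp: bv_def space_def intro!: sum.neutral)
  qed
qed

lemma sum_vec_space:
  "(\<forall>k\<in>S. (u k::'k::comm_ring_1 vec) \<in> space I) \<Longrightarrow> (\<lambda>t. \<Sum>k\<in>S. c k * u k t) \<in> space I"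
  by (simp add: space_def)

lemma linear_sum:
  assumes "linear_on I f" "finite S" "\<forall>k\<in>S. u k \<in> space I"
  shows "f (\<lambda>t. \<Sum>k\<in>S. c k * u k t) = (\<lambda>t. \<Sum>k\<in>S. c k * f (u k) t)"
  using assms(2,3)
proof (induction S rule: finite_induct)
  case empty
  then show ?case using linear_zero[OF assms(1)] by simp
next
  case (insert x F)
  have e: "(\<lambda>t. \<Sum>k\<in>insert x F. c k * u k t) = vadd (smul (c x) (u x)) (\<lambda>t. \<Sum>k\<in>F. c k * u k t)"
    using insert by (simp add: vadd_def smul_def)
  have s: "(\<lambda>t. \<Sum>k\<in>F. c k * u k t) \<in> space I" using insert by (intro sum_vec_space) auto
  have "f (\<lambda>t. \<Sum>k\<in>insert x F. c k * u k t) = vadd (smul (c x) (f (u x))) (f (\<lambda>t. \<Sum>k\<in>F. c k * u k t))"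
    unfolding e using assms(1) s insert by (simp add: linear_on_def)
  also have "\<dots> = (\<lambda>t. \<Sum>k\<in>insert x F. c k * f (u k) t)"
    using insert by (simp add: vadd_def smul_def)
  finally show ?case .
qed

lemma ext_basis:
  assumes "finite I" "linear_on I f" "linear_on I g" "\<And>i. i \<in> I \<Longrightarrow> f (bv i) = g (bv i)"
    and "v \<in> space I"
  shows "f v = g v"
proof -
  have "f v = f (\<lambda>t. \<Sum>i\<in>I. v i * bv i t)" using expand_space[OF assms(1,5)] by simp
  also have "\<dots> = (\<lambda>t. \<Sum>i\<in>I. v i * f (bv i) t)" using linear_sum[OF assms(2,1)] by simp
  also have "\<dots> = (\<lambda>t. \<Sum>i\<in>I. v i * g (bv i) t)" using assms(4) by simp
  also have "\<dots> = g (\<lambda>t. \<Sum>i\<in>I. v i * bv i t)" using linear_sum[OF assms(3,1)] by simp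
  also have "\<dots> = g v" using expand_space[OF assms(1,5)] by simp
  finally show ?thesis .
qed

lemma tvec_vadd1: "tvec (vadd u u') v = vadd (tvec u v) (tvec u' v)" for u :: "'k::comm_ring_1 vec"
  by (auto simp: tvec_def vadd_def fun_eq_iff algebra_simps split: ix.split)
lemma tvec_vadd2: "tvec u (vadd v v') = vadd (tvec u v) (tvec u v')" for u :: "'k::comm_ring_1 vec"
  by (auto simp: tvec_def vadd_def fun_eq_iff algebra_simps split: ix.split)
lemma tvec_smul1: "tvec (smul c u) v = smul c (tvec u v)" for u :: "'k::comm_ring_1 vec"
  by (auto simp: tvec_def smul_def fun_eq_iff algebra_simps split: ix.split)
lemma tvec_smul2: "tvec u (smul c v) = smul c (tvec u v)" for u :: "'k::comm_ring_1 vec"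
  by (auto simp: tvec_def smul_def fun_eq_iff algebra_simps split: ix.split)

lemma assocL_tvec[simp]: "assocL (tvec u (tvec v w)) = tvec (tvec u v) w" for u :: "'k::comm_ring_1 vec"
  by (auto simp: assocL_def tvec_def fun_eq_iff split: ix.split)
lemma assocR_tvec[simp]: "assocR (tvec (tvec u v) w) = tvec u (tvec v w)" for u :: "'k::comm_ring_1 vec"
  by (auto simp: assocR_def tvec_def fun_eq_iff split: ix.split)

lemma assocL_vadd: "assocL (vadd v w) = vadd (assocL v) (assocL w)" for v :: "'k::comm_ring_1 vec"
  by (auto simp: assocL_def vadd_def fun_eq_iff split: ix.split)
lemma assocL_smul: "assocL (smul c v) = smul c (assocL v)" for v :: "'k::comm_ring_1 vec"
  by (auto simp: assocL_def smul_def fun_eq_iff split: ix.split)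
lemma assocR_vadd: "assocR (vadd v w) = vadd (assocR v) (assocR w)" for v :: "'k::comm_ring_1 vec"
  by (auto simp: assocR_def vadd_def fun_eq_iff split: ix.split)
lemma assocR_smul: "assocR (smul c v) = smul c (assocR v)" for v :: "'k::comm_ring_1 vec"
  by (auto simp: assocR_def smul_def fun_eq_iff split: ix.split)

lemma lin_assocL: "lin_on (tidx I (tidx J K)) (tidx (tidx I J) K) (assocL :: 'k::comm_ring_1 vec \<Rightarrow> _)"
  unfolding lin_on_def assocL_vadd assocL_smul by (auto simp: space_def assocL_def split: ix.split)
lemma lin_assocR: "lin_on (tidx (tidx I J) K) (tidx I (tidx J K)) (assocR :: 'k::comm_ring_1 vec \<Rightarrow> _)"
  unfolding lin_on_def assocR_vadd assocR_smul by (auto simp: space_def assocR_def split: ix.split)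

lemma assocR_L[simp]: "(v::'k::comm_ring_1 vec) \<in> space (tidx I (tidx J K)) \<Longrightarrow> assocR (assocL v) = v"
  by (auto simp: assocR_def assocL_def space_def fun_eq_iff split: ix.split)
lemma assocL_R[simp]: "(v::'k::comm_ring_1 vec) \<in> space (tidx (tidx I J) K) \<Longrightarrow> assocL (assocR v) = v"
  by (auto simp: assocR_def assocL_def space_def fun_eq_iff split: ix.split)

lemma lin_tvec1: "u \<in> space I \<Longrightarrow> lin_on J (tidx I J) (tvec u)"
  by (simp add: lin_on_def tvec_vadd2 tvec_smul2)
lemma lin_tvec2: "v \<in> space J \<Longrightarrow> lin_on I (tidx I J) (\<lambda>u. tvec u v)"
  by (simp add: lin_on_def tvec_vadd1 tvec_smul1)

lemma lin_comp: "lin_on I J f \<Longrightarrow> lin_on J K g \<Longrightarrow> lin_on I K (g \<circ> f)"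
  by (simp add: lin_on_def)
lemma lin_id: "lin_on I I (id :: 'k::comm_ring_1 vec \<Rightarrow> _)"
  by (simp add: lin_on_def)

lemma lin2_vadd: "lin2 I J g (vadd v w) = vadd (lin2 I J g v) (lin2 I J g w)"
  by (simp add: lin2_def vadd_def fun_eq_iff sum.distrib algebra_simps)
lemma lin2_smul: "lin2 I J g (smul c v) = smul c (lin2 I J g v)"
  by (simp add: lin2_def smul_def fun_eq_iff sum_distrib_left algebra_simps)
lemma lin2_space:
  "(\<And>i j. i \<in> I \<Longrightarrow> j \<in> J \<Longrightarrow> g (bv i) (bv j) \<in> space K) \<Longrightarrow> lin2 I J g w \<in> space K"
  by (auto simp: lin2_def space_def intro!: sum.neutral)
lemma lin_lin2:
  "(\<And>i j. i \<in> I \<Longrightarrow> j \<in> J \<Longrightarrow> g (bv i) (bv j) \<in> space K) \<Longrightarrow> lin_on (tidx I J) K (lin2 I J g)"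
  by (simp add: lin_on_def lin2_vadd lin2_smul lin2_space)

lemma lin2_bv:
  assumes "finite I" "finite J" "i \<in> I" "j \<in> J"
  shows "lin2 I J g (bv (Tn i j)) = g (bv i) (bv j)"
proof
  fix t
  have "lin2 I J g (bv (Tn i j)) t = (\<Sum>p\<in>I \<times> J. (if p = (i,j) then g (bv i) (bv j) t else 0))"
    unfolding lin2_def by (intro sum.cong) (auto simp: bv_def)
  also have "\<dots> = g (bv i) (bv j) t" using assms by simp
  finally show "lin2 I J g (bv (Tn i j)) t = g (bv i) (bv j) t" .
qed

lemma lin3_vadd: "lin3 I J K g (vadd v w) = vadd (lin3 I J K g v) (lin3 I J K g w)"
  by (simp add: lin3_def vadd_def fun_eq_iff sum.distrib algebra_simps)
lemma lin3_smul: "lin3 I J K g (smul c v) = smul c (lin3 I J K g v)"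
  by (simp add: lin3_def smul_def fun_eq_iff sum_distrib_left algebra_simps)

lemma lin3_bv:
  assumes "finite I" "finite J" "finite K" "i \<in> I" "j \<in> J" "k \<in> K"
  shows "lin3 I J K g (bv (Tn (Tn i j) k)) = g (bv i) (bv j) (bv k)"
proof
  fix t
  have "lin3 I J K g (bv (Tn (Tn i j) k)) t = (\<Sum>p\<in>I \<times> J \<times> K. (if p = (i,j,k) then g (bv i) (bv j) (bv k) t else 0))"
    unfolding lin3_def by (intro sum.cong) (auto simp: bv_def)
  also have "\<dots> = g (bv i) (bv j) (bv k) t" using assms by simp
  finally show "lin3 I J K g (bv (Tn (Tn i j) k)) t = g (bv i) (bv j) (bv k) t" .
qed

lemma linear_tvecfun1: "linear_on I (\<lambda>u. F (tvec u v))" if "\<And>a b. F (vadd a b) = vadd (F a) (F b)" "\<And>c a. F (smul c a) = smul c (F a)"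
  using that by (simp add: linear_on_def tvec_vadd1 tvec_smul1)

lemma lin2_tvec:
  assumes fin: "finite I" "finite J"
    and l1: "\<And>v. v \<in> space J \<Longrightarrow> linear_on I (\<lambda>u. g u v)"
    and l2: "\<And>u. u \<in> space I \<Longrightarrow> linear_on J (g u)"
    and u: "u \<in> space I" and v: "v \<in> space J"
  shows "lin2 I J g (tvec u v) = g u v"
proof -
  have step: "lin2 I J g (tvec (bv i) v) = g (bv i) v" if i: "i \<in> I" for i
  proof (rule ext_basis[OF fin(2), where v = v])
    show "linear_on J (\<lambda>v. lin2 I J g (tvec (bv i) v))"
      by (simp add: linear_on_def tvec_vadd2 tvec_smul2 lin2_vadd lin2_smul)
    show "linear_on J (g (bv i))" using l2 i by simp
    show "lin2 I J g (tvec (bv i) (bv j)) = g (bv i) (bv j)" if "j \<in> J" for j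
      using lin2_bv[OF fin i that] by (simp add: bv_Tn)
  qed (rule v)
  show ?thesis
  proof (rule ext_basis[OF fin(1), where v = u and f = "\<lambda>u. lin2 I J g (tvec u v)"])
    show "linear_on I (\<lambda>u. lin2 I J g (tvec u v))"
      by (simp add: linear_on_def tvec_vadd1 tvec_smul1 lin2_vadd lin2_smul)
  qed (use l1 v step u in auto)
qed

lemma linear_on_vaddsmul: "linear_on I f \<longleftrightarrow> (\<forall>v\<in>space I. \<forall>w\<in>space I. f (vadd v w) = vadd (f v) (f w))
     \<and> (\<forall>c. \<forall>v\<in>space I. f (smul c v) = smul c (f v))" by (simp add: linear_on_def)

lemma lin_tmap:
  "lin_on I I' f \<Longrightarrow> lin_on J J' g \<Longrightarrow> lin_on (tidx I J) (tidx I' J') (tmap I J f g)"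
  unfolding tmap_def by (rule lin_lin2) (simp add: lin_onD)

lemma tmap_tvec[simp]:
  assumes "finite I" "finite J" "lin_on I I' f" "lin_on J J' g" "u \<in> space I" "v \<in> space J"
  shows "tmap I J f g (tvec u v) = tvec (f u) (g v)"
  unfolding tmap_def
  apply (rule lin2_tvec)
  using assms by (auto simp: linear_on_def lin_on_def tvec_vadd1 tvec_smul1 tvec_vadd2 tvec_smul2)

lemma linear_tmap[simp]: "linear_on (tidx I J) (tmap I J f g)"
  by (simp add: tmap_def linear_on_def lin2_vadd lin2_smul)
lemma linear_assocL[simp]: "linear_on I (assocL :: 'k::comm_ring_1 vec \<Rightarrow> _)"
  by (simp add: linear_on_def assocL_vadd assocL_smul)
lemma linear_assocR[simp]: "linear_on I (assocR :: 'k::comm_ring_1 vec \<Rightarrow> _)"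
  by (simp add: linear_on_def assocR_vadd assocR_smul)
lemma linear_id[simp]: "linear_on I (id :: 'k::comm_ring_1 vec \<Rightarrow> _)"
  by (simp add: linear_on_def)
lemma linear_idL[simp]: "linear_on I (\<lambda>v. v :: 'k::comm_ring_1 vec)"
  by (simp add: linear_on_def)
lemma linear_lin2[simp]: "linear_on K (lin2 I J g)"
  by (simp add: linear_on_def lin2_vadd lin2_smul)

lemma tmap_tvec'[simp]:
  fixes f g :: "'k::comm_ring_1 vec \<Rightarrow> 'k vec"
  assumes "finite I" "finite J" "linear_on I f" "linear_on J g" "u \<in> space I" "v \<in> space J"
  shows "tmap I J f g (tvec u v) = tvec (f u) (g v)"
  unfolding tmap_def
proof (rule lin2_tvec[OF assms(1,2) _ _ assms(5,6)])
  fix v :: "'k vec" assume "v \<in> space J"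
  show "linear_on I (\<lambda>u. tvec (f u) (g v))"
    using assms(3) unfolding linear_on_def by (simp add: tvec_vadd1 tvec_smul1)
next
  fix u :: "'k vec" assume "u \<in> space I"
  show "linear_on J (\<lambda>v. tvec (f u) (g v))"
    using assms(4) unfolding linear_on_def by (simp add: tvec_vadd2 tvec_smul2)
qed

lemma tmap_space[simp]:
  "lin_on I I' f \<Longrightarrow> lin_on J J' g \<Longrightarrow> tmap I J f g w \<in> space (tidx I' J')"
  unfolding tmap_def by (rule lin2_space) (simp add: lin_onD)

lemma assocL_space[simp]: "(v::'k::comm_ring_1 vec) \<in> space (tidx I (tidx J K)) \<Longrightarrow> assocL v \<in> space (tidx (tidx I J) K)"
  by (rule lin_onD[OF lin_assocL])
lemma assocR_space[simp]: "(v::'k::comm_ring_1 vec) \<in> space (tidx (tidx I J) K) \<Longrightarrow> assocR v \<in> space (tidx I (tidx J K))"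
  by (rule lin_onD[OF lin_assocR])

lemma tmap_cong:
  "(\<And>i. i \<in> I \<Longrightarrow> f (bv i) = f' (bv i)) \<Longrightarrow> (\<And>j. j \<in> J \<Longrightarrow> g (bv j) = g' (bv j))
   \<Longrightarrow> tmap I J f g = tmap I J f' g'"
  unfolding tmap_def lin2_def by (intro ext sum.cong) auto

lemma lin_idL: "lin_on I I (\<lambda>v. v :: 'k::comm_ring_1 vec)"
  by (simp add: lin_on_def)
lemma lin_tmapL: "lin_on I (tidx A B) F \<Longrightarrow> lin_on A A' f \<Longrightarrow> lin_on B B' g
   \<Longrightarrow> lin_on I (tidx A' B') (\<lambda>v. tmap A B f g (F v))"
  using lin_comp[OF _ lin_tmap, of I A B F A' f B' g] by (simp add: o_def)
lemma lin_aLL: "lin_on I (tidx A (tidx B C)) F \<Longrightarrow> lin_on I (tidx (tidx A B) C) (\<lambda>v. assocL (F v))"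
  using lin_comp[OF _ lin_assocL, of I A B C F] by (simp add: o_def)
lemma lin_aRL: "lin_on I (tidx (tidx A B) C) F \<Longrightarrow> lin_on I (tidx A (tidx B C)) (\<lambda>v. assocR (F v))"
  using lin_comp[OF _ lin_assocR, of I A B C F] by (simp add: o_def)
lemma lin_tvec1L: "u \<in> space A \<Longrightarrow> lin_on I B F \<Longrightarrow> lin_on I (tidx A B) (\<lambda>v. tvec u (F v))"
  using lin_comp[OF _ lin_tvec1, of I B F u A] by (simp add: o_def)
lemma lin_tvec2L: "w \<in> space B \<Longrightarrow> lin_on I A F \<Longrightarrow> lin_on I (tidx A B) (\<lambda>v. tvec (F v) w)"
  using lin_comp[OF _ lin_tvec2, of I A F w B] by (simp add: o_def)
lemma lin_appL: "lin_on I J F \<Longrightarrow> lin_on J K g \<Longrightarrow> lin_on I K (\<lambda>v. g (F v))"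
  using lin_comp[of I J F K g] by (simp add: o_def)

lemmas lin_basic = lin_idL lin_tmapL lin_aLL lin_aRL lin_tvec1L lin_tvec2L lin_tmap lin_assocL lin_assocR lin_id

lemma ext_lin:
  assumes "finite I" "lin_on I J f" "lin_on I K g" "\<And>i. i \<in> I \<Longrightarrow> f (bv i) = g (bv i)"
    and "v \<in> space I"
  shows "f v = g v"
  using ext_basis[OF assms(1) lin_on_linear[OF assms(2)] lin_on_linear[OF assms(3)] assms(4,5)] .

lemma ext_lin2:
  assumes "finite I" "finite J" "lin_on (tidx I J) K f" "lin_on (tidx I J) L g"
    "\<And>i j. i \<in> I \<Longrightarrow> j \<in> J \<Longrightarrow> f (tvec (bv i) (bv j)) = g (tvec (bv i) (bv j))"
    and "v \<in> space (tidx I J)"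
  shows "f v = g v"
proof (rule ext_lin[OF _ assms(3,4) _ assms(6)])
  fix t assume "t \<in> tidx I J"
  then obtain i j where "t = Tn i j" "i \<in> I" "j \<in> J" by (auto simp: tidx_def)
  then show "f (bv t) = g (bv t)" using assms(5) by (simp add: bv_Tn)
qed (simp add: assms)

lemma ext_lin3:
  assumes "finite I" "finite J" "finite M" "lin_on (tidx (tidx I J) M) K f" "lin_on (tidx (tidx I J) M) L g"
    "\<And>i j m. i \<in> I \<Longrightarrow> j \<in> J \<Longrightarrow> m \<in> M \<Longrightarrow> f (tvec (tvec (bv i) (bv j)) (bv m)) = g (tvec (tvec (bv i) (bv j)) (bv m))"
    and "v \<in> space (tidx (tidx I J) M)"
  shows "f v = g v"
proof (rule ext_lin[OF _ assms(4,5) _ assms(7)])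
  fix t assume "t \<in> tidx (tidx I J) M"
  then obtain i j m where "t = Tn (Tn i j) m" "i \<in> I" "j \<in> J" "m \<in> M" by (auto simp: tidx_def)
  then show "f (bv t) = g (bv t)" using assms(6) by (simp add: bv_Tn)
qed (simp add: assms)

lemma ext_lin3R:
  assumes "finite I" "finite J" "finite M" "lin_on (tidx I (tidx J M)) K f" "lin_on (tidx I (tidx J M)) L g"
    "\<And>i j m. i \<in> I \<Longrightarrow> j \<in> J \<Longrightarrow> m \<in> M \<Longrightarrow> f (tvec (bv i) (tvec (bv j) (bv m))) = g (tvec (bv i) (tvec (bv j) (bv m)))"
    and "v \<in> space (tidx I (tidx J M))"
  shows "f v = g v"
proof (rule ext_lin[OF _ assms(4,5) _ assms(7)])
  fix t assume "t \<in> tidx I (tidx J M)"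
  then obtain i j m where "t = Tn i (Tn j m)" "i \<in> I" "j \<in> J" "m \<in> M" by (auto simp: tidx_def)
  then show "f (bv t) = g (bv t)" using assms(6) by (simp add: bv_Tn)
qed (simp add: assms)

lemma linear_of_lin: "lin_on I J f \<Longrightarrow> linear_on I f" by (rule lin_on_linear)


lemma tmap_comp:
  fixes f f' g g' :: "'k::comm_ring_1 vec \<Rightarrow> 'k vec"
  assumes fin: "finite I" "finite J" "finite I'" "finite J'"
    and l: "lin_on I I' f'" "lin_on J J' g'" "lin_on I' I'' f" "lin_on J' J'' g"
    and w: "w \<in> space (tidx I J)"
  shows "tmap I' J' f g (tmap I J f' g' w) = tmap I J (\<lambda>x. f (f' x)) (\<lambda>y. g (g' y)) w"
proof (rule ext_lin2[OF fin(1,2) _ _ _ w])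
  show "lin_on (tidx I J) (tidx I'' J'') (\<lambda>w. tmap I' J' f g (tmap I J f' g' w))"
    by (intro lin_tmapL lin_tmap l)
  show "lin_on (tidx I J) (tidx I'' J'') (tmap I J (\<lambda>x. f (f' x)) (\<lambda>y. g (g' y)))"
    by (rule lin_tmap[OF lin_appL[OF l(1,3)] lin_appL[OF l(2,4)]])
  fix i j assume ij: "i \<in> I" "j \<in> J"
  have s: "f' (bv i) \<in> space I'" "g' (bv j) \<in> space J'" using l ij by (auto simp: lin_onD)
  have lf: "linear_on I' f" "linear_on J' g" "linear_on I f'" "linear_on J g'"
    using l by (auto intro: lin_on_linear)
  have lc: "linear_on I (\<lambda>x. f (f' x))" "linear_on J (\<lambda>y. g (g' y))"
    using lin_on_linear[OF lin_appL[OF l(1,3)]] lin_on_linear[OF lin_appL[OF l(2,4)]] by auto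
  show "tmap I' J' f g (tmap I J f' g' (tvec (bv i) (bv j))) = tmap I J (\<lambda>x. f (f' x)) (\<lambda>y. g (g' y)) (tvec (bv i) (bv j))"
    using fin ij s lf lc by simp
qed

lemma tmap_id:
  assumes "finite I" "finite J" "w \<in> space (tidx I J)"
  shows "tmap I J id id w = (w :: 'k::comm_ring_1 vec)"
proof (rule ext_lin2[OF assms(1,2) _ _ _ assms(3)])
  show "lin_on (tidx I J) (tidx I J) (tmap I J id (id :: 'k vec \<Rightarrow> _))" by (intro lin_basic)
  show "lin_on (tidx I J) (tidx I J) (\<lambda>w. w :: 'k vec)" by (rule lin_idL)
qed (use assms in simp)

lemma aL_nat1:
  fixes f g k :: "'k::comm_ring_1 vec \<Rightarrow> 'k vec"
  assumes fin: "finite I" "finite J" "finite K"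
    and l: "lin_on J J' g" "lin_on K K' k" "lin_on I I' f"
    and u: "u \<in> space I" and Z: "Z \<in> space (tidx J K)"
  shows "assocL (tvec (f u) (tmap J K g k Z)) = tmap (tidx I J) K (tmap I J f g) k (assocL (tvec u Z))"
proof (rule ext_lin2[OF fin(2,3) _ _ _ Z])
  have fu: "f u \<in> space I'" using l u by (simp add: lin_onD)
  show "lin_on (tidx J K) (tidx (tidx I' J') K') (\<lambda>Z. assocL (tvec (f u) (tmap J K g k Z)))"
    by (intro lin_basic l fu)
  show "lin_on (tidx J K) (tidx (tidx I' J') K') (\<lambda>Z. tmap (tidx I J) K (tmap I J f g) k (assocL (tvec u Z)))"
    by (intro lin_basic l u)
  fix i j assume ij: "i \<in> J" "j \<in> K"
  have lf: "linear_on I f" "linear_on J g" "linear_on K k"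
    using l by (auto intro: lin_on_linear)
  have s: "g (bv i) \<in> space J'" "k (bv j) \<in> space K'" using l ij by (auto simp: lin_onD)
  show "assocL (tvec (f u) (tmap J K g k (tvec (bv i) (bv j)))) =
         tmap (tidx I J) K (tmap I J f g) k (assocL (tvec u (tvec (bv i) (bv j))))"
    using fin ij lf u by simp
qed

lemma pent1:
  fixes y u Z :: "'k::comm_ring_1 vec"
  assumes fin: "finite X" "finite H" "finite B" "finite B'"
    and y: "y \<in> space X" and u: "u \<in> space H" and Z: "Z \<in> space (tidx B B')"
  shows "tmap (tidx X (tidx H B)) B' assocL id (assocL (tvec y (assocL (tvec u Z))))
         = assocL (tvec (tvec y u) Z)"
proof (rule ext_lin2[OF fin(3,4) _ _ _ Z])
  show "lin_on (tidx B B') (tidx (tidx (tidx X H) B) B') (\<lambda>Z. tmap (tidx X (tidx H B)) B' assocL id (assocL (tvec y (assocL (tvec u Z)))))"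
    by (intro lin_basic y u)
  show "lin_on (tidx B B') (tidx (tidx (tidx X H) B) B') (\<lambda>Z. assocL (tvec (tvec y u) Z))"
    by (intro lin_basic y u tvec_space)
  fix i j assume ij: "i \<in> B" "j \<in> B'"
  show "tmap (tidx X (tidx H B)) B' assocL id (assocL (tvec y (assocL (tvec u (tvec (bv i) (bv j)))))) =
         assocL (tvec (tvec y u) (tvec (bv i) (bv j)))"
    using fin ij y u by simp
qed

lemma obj_fin: "is_obj I a \<Longrightarrow> finite I" by (simp add: is_obj_def)
lemma obj_lin: "is_obj I a \<Longrightarrow> lin_on I I a" by (simp add: is_obj_def)
lemma obj_bij: "is_obj I a \<Longrightarrow> bij_betw a (space I) (space I)" by (simp add: is_obj_def)

lemma obj_inv_lin:
  fixes a :: "'k::comm_ring_1 vec \<Rightarrow> 'k vec"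
  assumes "is_obj I a" shows "lin_on I I (inv_into (space I) a)"
proof -
  let ?g = "inv_into (space I) a"
  have b: "bij_betw a (space I) (space I)" using assms by (simp add: is_obj_def)
  have l: "lin_on I I a" using assms by (simp add: is_obj_def)
  have gs: "?g v \<in> space I" if "v \<in> space I" for v
    using b that by (metis bij_betw_def inv_into_into)
  have ag: "a (?g v) = v" if "v \<in> space I" for v
    using b that by (metis bij_betw_def f_inv_into_f)
  have inj: "inj_on a (space I)" using b by (simp add: bij_betw_def)
  show ?thesis unfolding lin_on_def
  proof (intro conjI ballI allI)
    fix v :: "'k vec" assume "v \<in> space I" then show "?g v \<in> space I" by (rule gs)
  next
    fix v w :: "'k vec" assume vw: "v \<in> space I" "w \<in> space I"
    have "a (vadd (?g v) (?g w)) = vadd v w"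
      using l vw gs ag unfolding lin_on_def by simp
    then show "?g (vadd v w) = vadd (?g v) (?g w)"
      using inj vw gs by (metis inv_into_f_f vadd_space)
  next
    fix c and v :: "'k vec" assume v: "v \<in> space I"
    have "a (smul c (?g v)) = smul c v"
      using l v gs ag unfolding lin_on_def by simp
    then show "?g (smul c v) = smul c (?g v)"
      using inj v gs by (metis inv_into_f_f smul_space)
  qed
qed

lemma obj_ag: "is_obj I a \<Longrightarrow> v \<in> space I \<Longrightarrow> a (inv_into (space I) a v) = v"
  by (metis bij_betw_def f_inv_into_f obj_bij)
lemma obj_ga: "is_obj I a \<Longrightarrow> v \<in> space I \<Longrightarrow> inv_into (space I) a (a v) = v"
  by (meson bij_betw_inv_into_left obj_bij)

lemma zpow_nonneg: "0 \<le> m \<Longrightarrow> zpow I a m = a ^^ nat m" by (simp add: zpow_def)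
lemma zpow_neg: "m < 0 \<Longrightarrow> zpow I a m = inv_into (space I) a ^^ nat (- m)" by (simp add: zpow_def)

lemma zpow_lin:
  fixes a :: "'k::comm_ring_1 vec \<Rightarrow> 'k vec"
  assumes "is_obj I a" shows "lin_on I I (zpow I a m)"
proof -
  have pw: "lin_on I I (f ^^ k)" if "lin_on I I f" for f :: "'k vec \<Rightarrow> 'k vec" and k
  proof (induction k)
    case 0 show ?case by (simp add: lin_id lin_idL)
  next
    case (Suc k)
    have "lin_on I I (f \<circ> (f ^^ k))" by (rule lin_comp[OF Suc that])
    then show ?case by (simp add: comp_def)
  qed
  show ?thesis unfolding zpow_def
    using pw[OF obj_lin[OF assms]] pw[OF obj_inv_lin[OF assms]] by simp
qed

lemma zpow_space: "is_obj I a \<Longrightarrow> v \<in> space I \<Longrightarrow> zpow I a m v \<in> space I"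
  by (rule lin_onD[OF zpow_lin])

lemma zpow_succ:
  fixes a :: "'k::comm_ring_1 vec \<Rightarrow> 'k vec"
  assumes o: "is_obj I a" and v: "v \<in> space I"
  shows "zpow I a (m + 1) v = a (zpow I a m v)"
proof (cases "0 \<le> m")
  case True
  then have "nat (m + 1) = Suc (nat m)" by simp
  then show ?thesis using True by (simp add: zpow_def)
next
  case False
  let ?g = "inv_into (space I) a"
  have e: "nat (- m) = Suc (nat (- (m + 1)))" using False by simp
  have "zpow I a m v = ?g (zpow I a (m + 1) v)"
    using False e by (simp add: zpow_def)
  moreover have "zpow I a (m + 1) v \<in> space I" using zpow_space[OF o v] .
  ultimately show ?thesis using obj_ag[OF o] by simp
qed

lemma zpow_pred:
  fixes a :: "'k::comm_ring_1 vec \<Rightarrow> 'k vec"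
  assumes o: "is_obj I a" and v: "v \<in> space I"
  shows "zpow I a (m - 1) v = inv_into (space I) a (zpow I a m v)"
proof -
  have s: "zpow I a (m - 1) v \<in> space I" using zpow_space[OF o v] .
  have "zpow I a m v = a (zpow I a (m - 1) v)" using zpow_succ[OF o v, of "m - 1"] by simp
  then show ?thesis using obj_ga[OF o s] by simp
qed

lemma zpow_0[simp]: "zpow I a 0 v = v" by (simp add: zpow_def)
lemma zpow_0f: "zpow I a 0 = id" by (simp add: zpow_def)
lemma zpow_1: "zpow I a 1 = a" by (simp add: zpow_def)
lemma zpow_m1: "zpow I a (-1) = inv_into (space I) a" by (simp add: zpow_def)

lemma zpow_add:
  fixes a :: "'k::comm_ring_1 vec \<Rightarrow> 'k vec"
  assumes o: "is_obj I a" and v: "v \<in> space I"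
  shows "zpow I a m (zpow I a k v) = zpow I a (m + k) v"
proof (induction m rule: int_induct[where k = 0])
  case base then show ?case by simp
next
  case (step1 i)
  have s: "zpow I a k v \<in> space I" using zpow_space[OF o v] .
  have s2: "zpow I a (i + k) v \<in> space I" using zpow_space[OF o v] .
  show ?case using zpow_succ[OF o s, of i] zpow_succ[OF o v, of "i + k"] step1
    by (simp add: add.commute add.left_commute)
next
  case (step2 i)
  have s: "zpow I a k v \<in> space I" using zpow_space[OF o v] .
  show ?case using zpow_pred[OF o s, of i] zpow_pred[OF o v, of "i + k"] step2
    by (simp add: algebra_simps)
qed


lemma intertwine_zpow:
  fixes a b F :: "'k::comm_ring_1 vec \<Rightarrow> 'k vec"
  assumes oa: "is_obj I a" and ob: "is_obj J b" and F: "lin_on I J F"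
    and c: "\<And>v. v \<in> space I \<Longrightarrow> F (a v) = b (F v)" and v: "v \<in> space I"
  shows "F (zpow I a m v) = zpow J b m (F v)"
  using v
proof (induction m arbitrary: v rule: int_induct[where k = 0])
  case base then show ?case by simp
next
  case (step1 i)
  have s: "zpow I a i v \<in> space I" using zpow_space[OF oa step1.prems] .
  have Fs: "F v \<in> space J" using F step1.prems by (simp add: lin_onD)
  show ?case using zpow_succ[OF oa step1.prems, of i] zpow_succ[OF ob Fs, of i] c[OF s] step1 by simp
next
  case (step2 i)
  have s: "zpow I a (i - 1) v \<in> space I" using zpow_space[OF oa step2.prems] .
  have Fs: "F v \<in> space J" using F step2.prems by (simp add: lin_onD)
  have Fs2: "F (zpow I a (i - 1) v) \<in> space J" using F s by (simp add: lin_onD)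
  have "F (zpow I a i v) = b (F (zpow I a (i - 1) v))"
    using c[OF s] zpow_succ[OF oa step2.prems, of "i - 1"] by simp
  then have "inv_into (space J) b (F (zpow I a i v)) = F (zpow I a (i - 1) v)"
    using obj_ga[OF ob Fs2] by simp
  then show ?case using step2 zpow_pred[OF ob Fs, of i] by simp
qed

lemma obj_tmap:
  fixes a b :: "'k::comm_ring_1 vec \<Rightarrow> 'k vec"
  assumes oa: "is_obj I a" and ob: "is_obj J b"
  shows "is_obj (tidx I J) (tmap I J a b)"
    and "w \<in> space (tidx I J) \<Longrightarrow> inv_into (space (tidx I J)) (tmap I J a b) w
          = tmap I J (inv_into (space I) a) (inv_into (space J) b) w"
proof -
  let ?ga = "inv_into (space I) a" and ?gb = "inv_into (space J) b"
  have fin: "finite I" "finite J" using oa ob by (auto simp: obj_fin)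
  have la: "lin_on I I a" "lin_on J J b" using oa ob by (auto simp: obj_lin)
  have lg: "lin_on I I ?ga" "lin_on J J ?gb" using oa ob by (auto simp: obj_inv_lin)
  have T: "lin_on (tidx I J) (tidx I J) (tmap I J a b)" by (rule lin_tmap[OF la])
  have G: "lin_on (tidx I J) (tidx I J) (tmap I J ?ga ?gb)" by (rule lin_tmap[OF lg])
  have lc1: "tmap I J ?ga ?gb (tmap I J a b w) = w" if w: "w \<in> space (tidx I J)" for w
  proof -
    have "tmap I J ?ga ?gb (tmap I J a b w) = tmap I J (\<lambda>x. ?ga (a x)) (\<lambda>y. ?gb (b y)) w"
      by (rule tmap_comp[OF fin fin la lg w])
    also have "\<dots> = tmap I J id id w"
      by (rule arg_cong[where f = "\<lambda>h. h w"], rule tmap_cong) (auto simp: obj_ga[OF oa] obj_ga[OF ob])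
    also have "\<dots> = w" by (rule tmap_id[OF fin w])
    finally show ?thesis .
  qed
  have lc2: "tmap I J a b (tmap I J ?ga ?gb w) = w" if w: "w \<in> space (tidx I J)" for w
  proof -
    have "tmap I J a b (tmap I J ?ga ?gb w) = tmap I J (\<lambda>x. a (?ga x)) (\<lambda>y. b (?gb y)) w"
      by (rule tmap_comp[OF fin fin lg la w])
    also have "\<dots> = tmap I J id id w"
      by (rule arg_cong[where f = "\<lambda>h. h w"], rule tmap_cong) (auto simp: obj_ag[OF oa] obj_ag[OF ob])
    also have "\<dots> = w" by (rule tmap_id[OF fin w])
    finally show ?thesis .
  qed
  have bij: "bij_betw (tmap I J a b) (space (tidx I J)) (space (tidx I J))"
    by (rule bij_betw_byWitness[where f' = "tmap I J ?ga ?gb"]) (use lc1 lc2 T G lin_onD in auto)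
  show "is_obj (tidx I J) (tmap I J a b)" unfolding is_obj_def using fin T bij by simp
  assume w: "w \<in> space (tidx I J)"
  show "inv_into (space (tidx I J)) (tmap I J a b) w = tmap I J ?ga ?gb w"
  proof (rule inv_into_f_eq)
    show "inj_on (tmap I J a b) (space (tidx I J))" using bij by (simp add: bij_betw_def)
    show "tmap I J ?ga ?gb w \<in> space (tidx I J)" using G w by (simp add: lin_onD)
    show "tmap I J a b (tmap I J ?ga ?gb w) = w" by (rule lc2[OF w])
  qed
qed

lemma zpow_tmap:
  fixes a b :: "'k::comm_ring_1 vec \<Rightarrow> 'k vec"
  assumes oa: "is_obj I a" and ob: "is_obj J b" and w: "w \<in> space (tidx I J)"
  shows "zpow (tidx I J) (tmap I J a b) m w = tmap I J (zpow I a m) (zpow J b m) w"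
  using w
proof (induction m arbitrary: w rule: int_induct[where k = 0])
  case base
  have fin: "finite I" "finite J" using oa ob by (auto simp: obj_fin)
  show ?case using tmap_id[OF fin base] unfolding zpow_0f id_def by simp
next
  case (step1 i)
  have fin: "finite I" "finite J" using oa ob by (auto simp: obj_fin)
  have la: "lin_on I I a" "lin_on J J b" using oa ob by (auto simp: obj_lin)
  have lz: "lin_on I I (zpow I a i)" "lin_on J J (zpow J b i)" using oa ob by (auto simp: zpow_lin)
  have "zpow (tidx I J) (tmap I J a b) (i + 1) w = tmap I J a b (zpow (tidx I J) (tmap I J a b) i w)"
    by (rule zpow_succ[OF obj_tmap(1)[OF oa ob] step1.prems])
  also have "\<dots> = tmap I J a b (tmap I J (zpow I a i) (zpow J b i) w)" using step1 by simp
  also have "\<dots> = tmap I J (\<lambda>x. a (zpow I a i x)) (\<lambda>y. b (zpow J b i y)) w"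
    by (rule tmap_comp[OF fin fin lz la step1.prems])
  also have "\<dots> = tmap I J (zpow I a (i + 1)) (zpow J b (i + 1)) w"
    by (rule arg_cong[where f = "\<lambda>h. h w"], rule tmap_cong) (auto simp: zpow_succ[OF oa] zpow_succ[OF ob])
  finally show ?case .
next
  case (step2 i)
  have fin: "finite I" "finite J" using oa ob by (auto simp: obj_fin)
  have la: "lin_on I I (inv_into (space I) a)" "lin_on J J (inv_into (space J) b)" using oa ob by (auto simp: obj_inv_lin)
  have lz: "lin_on I I (zpow I a i)" "lin_on J J (zpow J b i)" using oa ob by (auto simp: zpow_lin)
  have s: "zpow (tidx I J) (tmap I J a b) i w \<in> space (tidx I J)"
    by (rule zpow_space[OF obj_tmap(1)[OF oa ob] step2.prems])
  have "zpow (tidx I J) (tmap I J a b) (i - 1) w = inv_into (space (tidx I J)) (tmap I J a b) (zpow (tidx I J) (tmap I J a b) i w)"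
    by (rule zpow_pred[OF obj_tmap(1)[OF oa ob] step2.prems])
  also have "\<dots> = tmap I J (inv_into (space I) a) (inv_into (space J) b) (zpow (tidx I J) (tmap I J a b) i w)"
    by (rule obj_tmap(2)[OF oa ob s])
  also have "\<dots> = tmap I J (inv_into (space I) a) (inv_into (space J) b) (tmap I J (zpow I a i) (zpow J b i) w)" using step2 by simp
  also have "\<dots> = tmap I J (\<lambda>x. inv_into (space I) a (zpow I a i x)) (\<lambda>y. inv_into (space J) b (zpow J b i y)) w"
    by (rule tmap_comp[OF fin fin lz la step2.prems])
  also have "\<dots> = tmap I J (zpow I a (i - 1)) (zpow J b (i - 1)) w"
    by (rule arg_cong[where f = "\<lambda>h. h w"], rule tmap_cong) (auto simp: zpow_pred[OF oa] zpow_pred[OF ob])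
  finally show ?case .
qed

lemma smul_add: "smul (c + d) z = vadd (smul c z) (smul d z)" for z v w :: "'k::comm_ring_1 vec"
  by (simp add: smul_def vadd_def fun_eq_iff algebra_simps)
lemma smul_mult: "smul (c * d) z = smul c (smul d z)" for z v w :: "'k::comm_ring_1 vec"
  by (simp add: smul_def fun_eq_iff algebra_simps)
lemma smul_vadd: "smul c (vadd v w) = vadd (smul c v) (smul c w)" for z v w :: "'k::comm_ring_1 vec"
  by (simp add: smul_def vadd_def fun_eq_iff algebra_simps)
lemma smul_smul_comm: "smul c (smul d z) = smul d (smul c z)" for z v w :: "'k::comm_ring_1 vec"
  by (simp add: smul_def fun_eq_iff algebra_simps)

lemma linear_lin3[simp]: "linear_on K' (lin3 I J K g)"
  by (simp add: linear_on_def lin3_vadd lin3_smul)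
lemma lin3_space:
  "(\<And>i j k. i \<in> I \<Longrightarrow> j \<in> J \<Longrightarrow> k \<in> K \<Longrightarrow> g (bv i) (bv j) (bv k) \<in> space L) \<Longrightarrow> lin3 I J K g w \<in> space L"
  by (auto simp: lin3_def space_def intro!: sum.neutral)
lemma lin_lin3:
  "(\<And>i j k. i \<in> I \<Longrightarrow> j \<in> J \<Longrightarrow> k \<in> K \<Longrightarrow> g (bv i) (bv j) (bv k) \<in> space L) \<Longrightarrow> lin_on (tidx (tidx I J) K) L (lin3 I J K g)"
  by (simp add: lin_on_def lin3_vadd lin3_smul lin3_space)

lemma ccomult_tvec:
  fixes aC D a :: "'k::comm_ring_1 vec \<Rightarrow> 'k vec"
  assumes fin: "finite I" "finite C" and oC: "is_obj C aC" and D: "lin_on C (tidx C C) D"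
    and la: "lin_on I I a" and x: "x \<in> space I" and c: "c \<in> space C"
  shows "ccomult C aC D I a (tvec x c) = assocL (tvec (a x) (tmap C C id (inv_into (space C) aC) (D c)))"
  unfolding ccomult_def
proof (rule lin2_tvec[OF fin _ _ x c])
  fix v :: "'k vec" assume v: "v \<in> space C"
  show "linear_on I (\<lambda>u. assocL (tvec (a u) (tmap C C id (inv_into (space C) aC) (D v))))"
    using la unfolding linear_on_def lin_on_def by (simp add: tvec_vadd1 tvec_smul1 assocL_vadd assocL_smul)
next
  fix u :: "'k vec" assume u: "u \<in> space I"
  have lD: "linear_on C D" using D by (rule lin_on_linear)
  show "linear_on C (\<lambda>v. assocL (tvec (a u) (tmap C C id (inv_into (space C) aC) (D v))))"
    using D unfolding linear_on_def lin_on_def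
    by (simp add: tvec_vadd2 tvec_smul2 assocL_vadd assocL_smul tmap_def lin2_vadd lin2_smul)
qed

lemma lin_ccomult:
  fixes aC D a :: "'k::comm_ring_1 vec \<Rightarrow> 'k vec"
  assumes oC: "is_obj C aC" and D: "lin_on C (tidx C C) D" and la: "lin_on I I a"
  shows "lin_on (tidx I C) (tidx (tidx I C) C) (ccomult C aC D I a)"
  unfolding ccomult_def
proof (rule lin_lin2)
  fix i j assume ij: "i \<in> I" "j \<in> C"
  have "tmap C C id (inv_into (space C) aC) (D (bv j)) \<in> space (tidx C C)"
    by (rule tmap_space[OF lin_id obj_inv_lin[OF oC]])
  moreover have "a (bv i) \<in> space I" using la ij by (simp add: lin_onD)
  ultimately show "assocL (tvec (a (bv i)) (tmap C C id (inv_into (space C) aC) (D (bv j)))) \<in> space (tidx (tidx I C) C)"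
    by simp
qed

lemma ccounit_tvec:
  fixes a :: "'k::comm_ring_1 vec \<Rightarrow> 'k vec"
  assumes fin: "finite I" "finite C" and e: "lin_functional C e" and oa: "is_obj I a"
    and x: "x \<in> space I" and c: "c \<in> space C"
  shows "ccounit C e I a (tvec x c) = smul (e c) (inv_into (space I) a x)"
  unfolding ccounit_def
proof (rule lin2_tvec[OF fin _ _ x c])
  fix v :: "'k vec" assume v: "v \<in> space C"
  show "linear_on I (\<lambda>u. smul (e v) (inv_into (space I) a u))"
    using obj_inv_lin[OF oa] unfolding linear_on_def lin_on_def by (simp add: smul_vadd smul_smul_comm)
next
  fix u :: "'k vec" assume u: "u \<in> space I"
  show "linear_on C (\<lambda>v. smul (e v) (inv_into (space I) a u))"
    using e unfolding linear_on_def lin_functional_def by (simp add: smul_add smul_mult)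
qed

lemma lin_ccounit:
  fixes a :: "'k::comm_ring_1 vec \<Rightarrow> 'k vec"
  assumes oa: "is_obj I a"
  shows "lin_on (tidx I C) I (ccounit C e I a)"
  unfolding ccounit_def
  by (rule lin_lin2) (simp add: lin_onD[OF obj_inv_lin[OF oa]])

locale Setup =
  fixes IB IH :: "ix set"
    and aB DB aH DH :: "('k::field_char_0) vec \<Rightarrow> 'k vec"
    and eB eH :: "'k vec \<Rightarrow> 'k"
    and phi :: "'k vec \<Rightarrow> 'k vec"
    and n :: int
  assumes cB: "hom_coalgebra IB aB DB eB"
    and cH: "hom_coalgebra IH aH DH eH"
    and lphi: "lin_on (tidx IB IH) (tidx IH IB) phi"
    and phic: "\<forall>w\<in>space (tidx IB IH). phi (tmap IB IH aB aH w) = tmap IH IB aH aB (phi w)"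
begin

abbreviation "zB m \<equiv> zpow IB aB m"
abbreviation "zH m \<equiv> zpow IH aH m"
abbreviation "gB \<equiv> inv_into (space IB) aB"
abbreviation "gH \<equiv> inv_into (space IH) aH"

lemma oB: "is_obj IB aB" using cB by (simp add: hom_coalgebra_def)
lemma oH: "is_obj IH aH" using cH by (simp add: hom_coalgebra_def)
lemma finB[simp]: "finite IB" using oB by (simp add: is_obj_def)
lemma finH[simp]: "finite IH" using oH by (simp add: is_obj_def)
lemma laB: "lin_on IB IB aB" using oB by (simp add: is_obj_def)
lemma laH: "lin_on IH IH aH" using oH by (simp add: is_obj_def)
lemma lgB: "lin_on IB IB gB" by (rule obj_inv_lin[OF oB])
lemma lgH: "lin_on IH IH gH" by (rule obj_inv_lin[OF oH])
lemma lzB: "lin_on IB IB (zB m)" by (rule zpow_lin[OF oB])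
lemma lzH: "lin_on IH IH (zH m)" by (rule zpow_lin[OF oH])
lemma lDB: "lin_on IB (tidx IB IB) DB" using cB by (simp add: hom_coalgebra_def)
lemma lDH: "lin_on IH (tidx IH IH) DH" using cH by (simp add: hom_coalgebra_def)
lemma leB: "lin_functional IB eB" using cB by (simp add: hom_coalgebra_def)
lemma leH: "lin_functional IH eH" using cH by (simp add: hom_coalgebra_def)
lemma DBc: "v \<in> space IB \<Longrightarrow> DB (aB v) = tmap IB IB aB aB (DB v)" using cB by (simp add: hom_coalgebra_def)
lemma DHc: "v \<in> space IH \<Longrightarrow> DH (aH v) = tmap IH IH aH aH (DH v)" using cH by (simp add: hom_coalgebra_def)
lemma eBc: "v \<in> space IB \<Longrightarrow> eB (aB v) = eB v" using cB by (simp add: hom_coalgebra_def)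
lemma eHc: "v \<in> space IH \<Longrightarrow> eH (aH v) = eH v" using cH by (simp add: hom_coalgebra_def)

lemma sp_aB[simp]: "v \<in> space IB \<Longrightarrow> aB v \<in> space IB" using laB by (simp add: lin_onD)
lemma sp_aH[simp]: "v \<in> space IH \<Longrightarrow> aH v \<in> space IH" using laH by (simp add: lin_onD)
lemma sp_gB[simp]: "v \<in> space IB \<Longrightarrow> gB v \<in> space IB" using lgB by (simp add: lin_onD)
lemma sp_gH[simp]: "v \<in> space IH \<Longrightarrow> gH v \<in> space IH" using lgH by (simp add: lin_onD)
lemma sp_zB[simp]: "v \<in> space IB \<Longrightarrow> zB m v \<in> space IB" by (rule zpow_space[OF oB])
lemma sp_zH[simp]: "v \<in> space IH \<Longrightarrow> zH m v \<in> space IH" by (rule zpow_space[OF oH])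
lemma sp_DB[simp]: "v \<in> space IB \<Longrightarrow> DB v \<in> space (tidx IB IB)" using lDB by (simp add: lin_onD)
lemma sp_DH[simp]: "v \<in> space IH \<Longrightarrow> DH v \<in> space (tidx IH IH)" using lDH by (simp add: lin_onD)
lemma sp_phi[simp]: "v \<in> space (tidx IB IH) \<Longrightarrow> phi v \<in> space (tidx IH IB)" using lphi by (simp add: lin_onD)

lemma ln_aB[simp]: "linear_on IB aB" by (rule lin_on_linear[OF laB])
lemma ln_aH[simp]: "linear_on IH aH" by (rule lin_on_linear[OF laH])
lemma ln_gB[simp]: "linear_on IB gB" by (rule lin_on_linear[OF lgB])
lemma ln_gH[simp]: "linear_on IH gH" by (rule lin_on_linear[OF lgH])
lemma ln_zB[simp]: "linear_on IB (zB m)" by (rule lin_on_linear[OF lzB])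
lemma ln_zH[simp]: "linear_on IH (zH m)" by (rule lin_on_linear[OF lzH])
lemma ln_DB[simp]: "linear_on IB DB" by (rule lin_on_linear[OF lDB])
lemma ln_DH[simp]: "linear_on IH DH" by (rule lin_on_linear[OF lDH])
lemma ln_phi[simp]: "linear_on (tidx IB IH) phi" by (rule lin_on_linear[OF lphi])

lemma aBgB[simp]: "v \<in> space IB \<Longrightarrow> aB (gB v) = v" by (rule obj_ag[OF oB])
lemma gBaB[simp]: "v \<in> space IB \<Longrightarrow> gB (aB v) = v" by (rule obj_ga[OF oB])
lemma aHgH[simp]: "v \<in> space IH \<Longrightarrow> aH (gH v) = v" by (rule obj_ag[OF oH])
lemma gHaH[simp]: "v \<in> space IH \<Longrightarrow> gH (aH v) = v" by (rule obj_ga[OF oH])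

lemma zBzB[simp]: "v \<in> space IB \<Longrightarrow> zB m (zB k v) = zB (m + k) v" by (rule zpow_add[OF oB])
lemma zHzH[simp]: "v \<in> space IH \<Longrightarrow> zH m (zH k v) = zH (m + k) v" by (rule zpow_add[OF oH])
lemma aBzB[simp]: "v \<in> space IB \<Longrightarrow> aB (zB k v) = zB (k + 1) v"
  using zpow_add[OF oB, of v 1 k] by (simp add: zpow_1 add.commute)
lemma gBzB[simp]: "v \<in> space IB \<Longrightarrow> gB (zB k v) = zB (k - 1) v"
  using zpow_add[OF oB, of v "-1" k] by (simp add: zpow_m1)
lemma zBaB[simp]: "v \<in> space IB \<Longrightarrow> zB k (aB v) = zB (k + 1) v"
  using zpow_add[OF oB, of v k 1] by (simp add: zpow_1)
lemma zBgB[simp]: "v \<in> space IB \<Longrightarrow> zB k (gB v) = zB (k - 1) v"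
  using zpow_add[OF oB, of v k "-1"] by (simp add: zpow_m1)

lemma eB_zB[simp]: "v \<in> space IB \<Longrightarrow> eB (zB m v) = eB v"
proof (induction m arbitrary: v rule: int_induct[where k = 0])
  case base then show ?case by simp
next
  case (step1 i)
  have "eB (zB (i + 1) v) = eB (aB (zB i v))" using step1.prems by simp
  also have "\<dots> = eB (zB i v)" by (rule eBc) (simp add: step1.prems)
  finally show ?case using step1 by simp
next
  case (step2 i)
  have "eB (zB (i - 1) v) = eB (aB (zB (i - 1) v))" by (rule eBc[symmetric]) (simp add: step2.prems)
  also have "\<dots> = eB (zB i v)" using step2.prems by simp
  finally show ?case using step2 by simp
qed
lemma eH_gH[simp]: "v \<in> space IH \<Longrightarrow> eH (gH v) = eH v"
  using eHc[of "gH v"] by simp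

definition Phi where "Phi w = tmap IH IB id (zB n) (phi (tmap IB IH (zB (- n - 1)) aH w))"
definition tauB where "tauB b = tmap IB IB id gB (DB b)"
definition tauH where "tauH h = tmap IH IH id gH (DH h)"

lemma lPhi: "lin_on (tidx IB IH) (tidx IH IB) Phi"
proof -
  have "lin_on (tidx IB IH) (tidx IH IB) (\<lambda>w. tmap IH IB id (zB n) (phi (tmap IB IH (zB (- n - 1)) aH w)))"
    by (intro lin_tmapL lin_appL[OF _ lphi] lin_tmap lzB laH lin_id)
  then show ?thesis unfolding Phi_def[abs_def] .
qed
lemma ltauB: "lin_on IB (tidx IB IB) tauB"
proof -
  have "lin_on IB (tidx IB IB) (\<lambda>b. tmap IB IB id gB (DB b))"
    by (intro lin_tmapL lDB lgB lin_id)
  then show ?thesis unfolding tauB_def[abs_def] .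
qed
lemma ltauH: "lin_on IH (tidx IH IH) tauH"
proof -
  have "lin_on IH (tidx IH IH) (\<lambda>b. tmap IH IH id gH (DH b))"
    by (intro lin_tmapL lDH lgH lin_id)
  then show ?thesis unfolding tauH_def[abs_def] .
qed
lemma sp_Phi[simp]: "v \<in> space (tidx IB IH) \<Longrightarrow> Phi v \<in> space (tidx IH IB)" using lPhi by (simp add: lin_onD)
lemma sp_tauB[simp]: "v \<in> space IB \<Longrightarrow> tauB v \<in> space (tidx IB IB)" using ltauB by (simp add: lin_onD)
lemma sp_tauH[simp]: "v \<in> space IH \<Longrightarrow> tauH v \<in> space (tidx IH IH)" using ltauH by (simp add: lin_onD)
lemma ln_Phi[simp]: "linear_on (tidx IB IH) Phi" by (rule lin_on_linear[OF lPhi])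
lemma ln_tauB[simp]: "linear_on IB tauB" by (rule lin_on_linear[OF ltauB])
lemma ln_tauH[simp]: "linear_on IH tauH" by (rule lin_on_linear[OF ltauH])

lemma Phi_tvec[simp]: "b \<in> space IB \<Longrightarrow> h \<in> space IH \<Longrightarrow> Phi (tvec b h) = tmap IH IB id (zB n) (phi (tvec (zB (- n - 1) b) (aH h)))"
  by (simp add: Phi_def)

lemma lPhiL: "lin_on I (tidx IB IH) F \<Longrightarrow> lin_on I (tidx IH IB) (\<lambda>v. Phi (F v))" by (rule lin_appL[OF _ lPhi])
lemma lphiL: "lin_on I (tidx IB IH) F \<Longrightarrow> lin_on I (tidx IH IB) (\<lambda>v. phi (F v))" by (rule lin_appL[OF _ lphi])
lemma ltauBL: "lin_on I IB F \<Longrightarrow> lin_on I (tidx IB IB) (\<lambda>v. tauB (F v))" by (rule lin_appL[OF _ ltauB])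
lemma ltauHL: "lin_on I IH F \<Longrightarrow> lin_on I (tidx IH IH) (\<lambda>v. tauH (F v))" by (rule lin_appL[OF _ ltauH])
lemma lzBL: "lin_on I IB F \<Longrightarrow> lin_on I IB (\<lambda>v. zB m (F v))" by (rule lin_appL[OF _ lzB])
lemma lgHL: "lin_on I IH F \<Longrightarrow> lin_on I IH (\<lambda>v. gH (F v))" by (rule lin_appL[OF _ lgH])
lemma laHL: "lin_on I IH F \<Longrightarrow> lin_on I IH (\<lambda>v. aH (F v))" by (rule lin_appL[OF _ laH])

lemmas lin_loc = lPhi lphi ltauB ltauH lzB lzH laB laH lgB lgH lDB lDH lPhiL lphiL ltauBL ltauHL lzBL lgHL laHL

end

context Setup
begin

declare lin_id[simp] lzB[simp] lzH[simp] laB[simp] laH[simp] lgB[simp] lgH[simp] lDB[simp] lDH[simp]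
  lphi[simp] lPhi[simp] ltauB[simp] ltauH[simp] lin_assocL[simp] lin_assocR[simp]

lemma DB_z: "v \<in> space IB \<Longrightarrow> DB (zB m v) = tmap IB IB (zB m) (zB m) (DB v)"
  using intertwine_zpow[OF oB obj_tmap(1)[OF oB oB] lDB DBc] zpow_tmap[OF oB oB] by simp

lemma phi_z: "w \<in> space (tidx IB IH) \<Longrightarrow> phi (tmap IB IH (zB m) (zH m) w) = tmap IH IB (zH m) (zB m) (phi w)"
proof -
  assume w: "w \<in> space (tidx IB IH)"
  have "phi (zpow (tidx IB IH) (tmap IB IH aB aH) m w) = zpow (tidx IH IB) (tmap IH IB aH aB) m (phi w)"
    by (rule intertwine_zpow[OF obj_tmap(1)[OF oB oH] obj_tmap(1)[OF oH oB] lphi _ w]) (use phic in auto)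
  then show ?thesis using zpow_tmap[OF oB oH w] zpow_tmap[OF oH oB sp_phi[OF w]] by simp
qed

lemma tauB_z: "v \<in> space IB \<Longrightarrow> tauB (zB m v) = tmap IB IB (zB m) (zB (m - 1)) (DB v)"
proof -
  assume v: "v \<in> space IB"
  have "tauB (zB m v) = tmap IB IB id gB (tmap IB IB (zB m) (zB m) (DB v))"
    by (simp add: tauB_def DB_z v)
  also have "\<dots> = tmap IB IB (\<lambda>x. id (zB m x)) (\<lambda>y. gB (zB m y)) (DB v)"
    by (rule tmap_comp[where I''=IB and J''=IB]) (simp_all add: v)
  also have "\<dots> = tmap IB IB (zB m) (zB (m - 1)) (DB v)"
    by (rule arg_cong[where f = "\<lambda>h. h (DB v)"], rule tmap_cong) auto
  finally show ?thesis .
qed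

lemma tauH_aH: "v \<in> space IH \<Longrightarrow> tauH (aH v) = tmap IH IH aH id (DH v)"
proof -
  assume v: "v \<in> space IH"
  have "tauH (aH v) = tmap IH IH id gH (tmap IH IH aH aH (DH v))"
    by (simp add: tauH_def DHc v)
  also have "\<dots> = tmap IH IH (\<lambda>x. id (aH x)) (\<lambda>y. gH (aH y)) (DH v)"
    by (rule tmap_comp[where I''=IH and J''=IH]) (simp_all add: v)
  also have "\<dots> = tmap IH IH aH id (DH v)"
    by (rule arg_cong[where f = "\<lambda>h. h (DH v)"], rule tmap_cong) auto
  finally show ?thesis .
qed

abbreviation "Psi I a \<equiv> psi_n IB aB IH aH phi n I a"

lemma lPsi0: "lin_on (tidx (tidx I IB) IH) (tidx (tidx I IH) IB) (Psi I a)"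
  unfolding psi_n_def by (rule lin_lin3) (simp add: lin_onD)

lemma Psi_eq:
  assumes I: "finite I" and w: "w \<in> space (tidx (tidx I IB) IH)"
  shows "Psi I a w = assocL (tmap I (tidx IB IH) id Phi (assocR w))"
proof (rule ext_lin3[OF I finB finH lPsi0 _ _ w])
  show "lin_on (tidx (tidx I IB) IH) (tidx (tidx I IH) IB) (\<lambda>w. assocL (tmap I (tidx IB IH) id Phi (assocR w)))"
    by (intro lin_basic lin_loc)
  fix i j k assume ijk: "i \<in> I" "j \<in> IB" "k \<in> IH"
  have "Psi I a (tvec (tvec (bv i) (bv j)) (bv k)) = Psi I a (bv (Tn (Tn i j) k))" by (simp add: bv_Tn)
  also have "\<dots> = assocL (tvec (bv i) (tmap IH IB id (zB n) (phi (tvec (zB (- n - 1) (bv j)) (aH (bv k))))))"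
    unfolding psi_n_def by (rule lin3_bv[OF I finB finH ijk])
  finally show "Psi I a (tvec (tvec (bv i) (bv j)) (bv k)) = assocL (tmap I (tidx IB IH) id Phi (assocR (tvec (tvec (bv i) (bv j)) (bv k))))"
    using ijk I by simp
qed

lemma Psi_tvec[simp]:
  assumes "finite I" "x \<in> space I" "b \<in> space IB" "h \<in> space IH"
  shows "Psi I a (tvec (tvec x b) h) = assocL (tvec x (Phi (tvec b h)))"
  using assms by (simp add: Psi_eq)

lemma lPsi[simp]: "lin_on (tidx (tidx I IB) IH) (tidx (tidx I IH) IB) (Psi I a)" by (rule lPsi0)
lemma ln_Psi[simp]: "linear_on (tidx (tidx I IB) IH) (Psi I a)" by (rule lin_on_linear[OF lPsi0])

end

abbreviation Rf :: "ix set \<Rightarrow> ix set \<Rightarrow> ix set \<Rightarrow> ix set \<Rightarrow> ('k::comm_ring_1) vec \<Rightarrow> 'k vec \<Rightarrow> 'k vec" where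
  "Rf I J K L y Q \<equiv> tmap (tidx I (tidx J K)) L assocL id (assocL (tvec y Q))"

lemma linear_ccomult[simp]: "linear_on K (ccomult C aC D I a)"
  by (simp add: ccomult_def)
lemma linear_ccounit[simp]: "linear_on K (ccounit C e I a)"
  by (simp add: ccounit_def)

context Setup
begin

lemma ln_Psi_any[simp]: "linear_on K (Psi I a)" by (simp add: psi_n_def)

lemma lPsiL: "lin_on J (tidx (tidx I IB) IH) F \<Longrightarrow> lin_on J (tidx (tidx I IH) IB) (\<lambda>v. Psi I a (F v))"
  by (rule lin_appL[OF _ lPsi])

definition K1L where "K1L w = tmap (tidx IB IH) IB Phi id (assocL (tmap IB (tidx IB IH) id Phi (assocR (tmap IB IH tauB id w))))"
definition K1R where "K1R w = assocL (tmap IH IB aH tauB (Phi w))"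

context
  fixes I :: "ix set" and a :: "'k vec \<Rightarrow> 'k vec"
  assumes oX: "is_obj I a"
begin

lemma finX[simp]: "finite I" using oX by (simp add: is_obj_def)
lemma laX[simp]: "lin_on I I a" using oX by (simp add: is_obj_def)
lemma ln_aX[simp]: "linear_on I a" by (rule lin_on_linear[OF laX])
lemma sp_aX[simp]: "v \<in> space I \<Longrightarrow> a v \<in> space I" by (rule lin_onD[OF laX])

lemma lcomB[simp]: "lin_on (tidx I IB) (tidx (tidx I IB) IB) (ccomult IB aB DB I a)"
  by (rule lin_ccomult[OF oB lDB laX])
lemma lcomB_XH[simp]: "lin_on (tidx (tidx I IH) IB) (tidx (tidx (tidx I IH) IB) IB) (ccomult IB aB DB (tidx I IH) (tmap I IH a aH))"
  by (rule lin_ccomult[OF oB lDB lin_tmap[OF laX laH]])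
lemma lcomH[simp]: "lin_on (tidx I IH) (tidx (tidx I IH) IH) (ccomult IH aH DH I a)"
  by (rule lin_ccomult[OF oH lDH laX])
lemma lcomH_XB[simp]: "lin_on (tidx (tidx I IB) IH) (tidx (tidx (tidx I IB) IH) IH) (ccomult IH aH DH (tidx I IB) (tmap I IB a aB))"
  by (rule lin_ccomult[OF oH lDH lin_tmap[OF laX laB]])

lemma comB_tvec[simp]: "x \<in> space I \<Longrightarrow> b \<in> space IB \<Longrightarrow> ccomult IB aB DB I a (tvec x b) = assocL (tvec (a x) (tauB b))"
  by (simp add: ccomult_tvec[OF finX finB oB lDB laX] tauB_def)
lemma comH_tvec[simp]: "x \<in> space I \<Longrightarrow> h \<in> space IH \<Longrightarrow> ccomult IH aH DH I a (tvec x h) = assocL (tvec (a x) (tauH h))"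
  by (simp add: ccomult_tvec[OF finX finH oH lDH laX] tauH_def)

lemma S1:
  assumes y: "y \<in> space I" and Z: "Z \<in> space (tidx IB IB)" and h: "h \<in> space IH"
  shows "Psi (tidx I IB) c (tvec (assocL (tvec y Z)) h) = assocL (assocL (tvec y (tmap IB (tidx IB IH) id Phi (assocR (tvec Z h)))))"
proof (rule ext_lin2[OF finB finB _ _ _ Z])
  show "lin_on (tidx IB IB) (tidx (tidx (tidx I IB) IH) IB) (\<lambda>Z. Psi (tidx I IB) c (tvec (assocL (tvec y Z)) h))"
    by (intro lPsiL lin_basic y h)
  show "lin_on (tidx IB IB) (tidx (tidx (tidx I IB) IH) IB) (\<lambda>Z. assocL (assocL (tvec y (tmap IB (tidx IB IH) id Phi (assocR (tvec Z h))))))"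
    by (intro lin_basic lin_loc y h)
  fix i j assume ij: "i \<in> IB" "j \<in> IB"
  show "Psi (tidx I IB) c (tvec (assocL (tvec y (tvec (bv i) (bv j)))) h) =
        assocL (assocL (tvec y (tmap IB (tidx IB IH) id Phi (assocR (tvec (tvec (bv i) (bv j)) h)))))"
    using ij y h by simp
qed

lemma S2:
  assumes y: "y \<in> space I" and W: "W \<in> space (tidx IB (tidx IH IB))"
  shows "tmap (tidx (tidx I IB) IH) IB (Psi I a) id (assocL (assocL (tvec y W)))
       = Rf I IH IB IB y (tmap (tidx IB IH) IB Phi id (assocL W))"
proof (rule ext_lin3R[OF finB finH finB _ _ _ W])
  show "lin_on (tidx IB (tidx IH IB)) (tidx (tidx (tidx I IH) IB) IB) (\<lambda>W. tmap (tidx (tidx I IB) IH) IB (Psi I a) id (assocL (assocL (tvec y W))))"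
    by (intro lin_basic lPsi y)
  show "lin_on (tidx IB (tidx IH IB)) (tidx (tidx (tidx I IH) IB) IB) (\<lambda>W. Rf I IH IB IB y (tmap (tidx IB IH) IB Phi id (assocL W)))"
    by (intro lin_basic lin_loc y)
  fix i j k assume ijk: "i \<in> IB" "j \<in> IH" "k \<in> IB"
  show "tmap (tidx (tidx I IB) IH) IB (Psi I a) id (assocL (assocL (tvec y (tvec (bv i) (tvec (bv j) (bv k)))))) =
        Rf I IH IB IB y (tmap (tidx IB IH) IB Phi id (assocL (tvec (bv i) (tvec (bv j) (bv k)))))"
    using ijk y by simp
qed

lemma S3:
  assumes y: "y \<in> space I" and P: "P \<in> space (tidx IH IB)"
  shows "ccomult IB aB DB (tidx I IH) (tmap I IH a aH) (assocL (tvec y P))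
       = Rf I IH IB IB (a y) (assocL (tmap IH IB aH tauB P))"
proof (rule ext_lin2[OF finH finB _ _ _ P])
  show "lin_on (tidx IH IB) (tidx (tidx (tidx I IH) IB) IB) (\<lambda>P. ccomult IB aB DB (tidx I IH) (tmap I IH a aH) (assocL (tvec y P)))"
    by (intro lin_appL[OF _ lcomB_XH] lin_basic y)
  show "lin_on (tidx IH IB) (tidx (tidx (tidx I IH) IB) IB) (\<lambda>P. Rf I IH IB IB (a y) (assocL (tmap IH IB aH tauB P)))"
    by (intro lin_basic lin_loc sp_aX y)
  fix i j assume ij: "i \<in> IH" "j \<in> IB"
  have "ccomult IB aB DB (tidx I IH) (tmap I IH a aH) (tvec (tvec y (bv i)) (bv j))
      = assocL (tvec (tvec (a y) (aH (bv i))) (tauB (bv j)))"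
    using ccomult_tvec[OF _ finB oB lDB lin_tmap[OF laX laH], of "tvec y (bv i)" "bv j"] ij y
    by (simp add: tauB_def)
  also have "\<dots> = Rf I IH IB IB (a y) (assocL (tvec (aH (bv i)) (tauB (bv j))))"
    by (rule pent1[symmetric]) (use ij y in auto)
  finally show "ccomult IB aB DB (tidx I IH) (tmap I IH a aH) (assocL (tvec y (tvec (bv i) (bv j)))) =
        Rf I IH IB IB (a y) (assocL (tmap IH IB aH tauB (tvec (bv i) (bv j))))"
    using ij y by simp
qed


lemma ax1_L:
  assumes x: "x \<in> space I" and b: "b \<in> space IB" and h: "h \<in> space IH"
  shows "tmap (tidx (tidx I IB) IH) IB (Psi I a) id (Psi (tidx I IB) (tmap I IB a aB)
            (tmap (tidx I IB) IH (ccomult IB aB DB I a) id (tvec (tvec x b) h)))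
         = Rf I IH IB IB (a x) (K1L (tvec b h))"
proof -
  have "tmap (tidx I IB) IH (ccomult IB aB DB I a) id (tvec (tvec x b) h) = tvec (assocL (tvec (a x) (tauB b))) h"
    using x b h by simp
  moreover have "Psi (tidx I IB) (tmap I IB a aB) (tvec (assocL (tvec (a x) (tauB b))) h)
     = assocL (assocL (tvec (a x) (tmap IB (tidx IB IH) id Phi (assocR (tvec (tauB b) h)))))"
    by (rule S1) (use x b h in auto)
  moreover have "tmap (tidx (tidx I IB) IH) IB (Psi I a) id (assocL (assocL (tvec (a x) (tmap IB (tidx IB IH) id Phi (assocR (tvec (tauB b) h))))))
     = Rf I IH IB IB (a x) (tmap (tidx IB IH) IB Phi id (assocL (tmap IB (tidx IB IH) id Phi (assocR (tvec (tauB b) h)))))"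
    by (rule S2) (use x b h in auto)
  ultimately show ?thesis using b h by (simp add: K1L_def)
qed

lemma ax1_R:
  assumes x: "x \<in> space I" and b: "b \<in> space IB" and h: "h \<in> space IH"
  shows "ccomult IB aB DB (tidx I IH) (tmap I IH a aH) (Psi I a (tvec (tvec x b) h))
         = Rf I IH IB IB (a x) (K1R (tvec b h))"
  using S3[OF x sp_Phi[OF tvec_space[OF b h]]] x b h by (simp add: K1R_def)

end
end

lemma tmap_inv:
  fixes f f' g g' :: "'k::comm_ring_1 vec \<Rightarrow> 'k vec"
  assumes fin: "finite I" "finite J"
    and l: "lin_on I I f" "lin_on J J g" "lin_on I I f'" "lin_on J J g'"
    and i1: "\<And>v. v \<in> space I \<Longrightarrow> f' (f v) = v" and i2: "\<And>v. v \<in> space J \<Longrightarrow> g' (g v) = v"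
    and w: "w \<in> space (tidx I J)"
  shows "tmap I J f' g' (tmap I J f g w) = w"
proof -
  have "tmap I J f' g' (tmap I J f g w) = tmap I J (\<lambda>x. f' (f x)) (\<lambda>y. g' (g y)) w"
    by (rule tmap_comp[OF fin fin l w])
  also have "\<dots> = tmap I J id id w"
    by (rule arg_cong[where f = "\<lambda>h. h w"], rule tmap_cong) (auto simp: i1 i2)
  also have "\<dots> = w" by (rule tmap_id[OF fin w])
  finally show ?thesis .
qed

context Setup
begin

lemma phi_m1:
  assumes q: "q \<in> space IB" and h: "h \<in> space IH"
  shows "phi (tvec (zB (-1) q) h) = tmap IH IB gH gB (phi (tvec q (aH h)))"
proof -
  have "phi (tmap IB IH (zB (-1)) (zH (-1)) (tvec q (aH h))) = tmap IH IB (zH (-1)) (zB (-1)) (phi (tvec q (aH h)))"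
    by (rule phi_z) (simp add: q h)
  then show ?thesis using q h by (simp add: zpow_m1)
qed

abbreviation "T1 \<equiv> tmap (tidx IH IB) IB (tmap IH IB id (zB n)) (zB (n - 1))"
abbreviation "T1i \<equiv> tmap (tidx IH IB) IB (tmap IH IB id (zB (- n))) (zB (1 - n))"

lemma T1_inj:
  assumes V: "V \<in> space (tidx (tidx IH IB) IB)"
  shows "T1i (T1 V) = V"
proof (rule tmap_inv[OF _ finB _ _ _ _ _ _ V])
  fix v :: "'k vec" assume v: "v \<in> space (tidx IH IB)"
  show "tmap IH IB id (zB (- n)) (tmap IH IB id (zB n) v) = v"
    by (rule tmap_inv[OF finH finB _ _ _ _ _ _ v]) auto
qed (auto intro: lin_tmap)

definition M1L where "M1L b h = tmap (tidx IB IH) IB phi id (assocL (tmap IB (tidx IB IH) id phi (assocR (tvec (DB b) (aH h)))))"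
definition M1R where "M1R b h = assocL (tmap IH IB aH DB (phi (tvec b h)))"

lemma sp_M1L: "b \<in> space IB \<Longrightarrow> h \<in> space IH \<Longrightarrow> M1L b h \<in> space (tidx (tidx IH IB) IB)"
  by (simp add: M1L_def)
lemma sp_M1R: "b \<in> space IB \<Longrightarrow> h \<in> space IH \<Longrightarrow> M1R b h \<in> space (tidx (tidx IH IB) IB)"
  by (simp add: M1R_def)

lemma A2:
  assumes p: "p \<in> space IB" and W: "W \<in> space (tidx IH IB)"
  shows "tmap (tidx IB IH) IB Phi id (assocL (tvec (zB (n + 1) p) (tmap IH IB id (zB n) (tmap IH IB gH gB W))))
       = T1 (tmap (tidx IB IH) IB phi id (assocL (tvec p W)))"
proof (rule ext_lin2[OF finH finB _ _ _ W])
  show "lin_on (tidx IH IB) (tidx (tidx IH IB) IB) (\<lambda>W. tmap (tidx IB IH) IB Phi id (assocL (tvec (zB (n + 1) p) (tmap IH IB id (zB n) (tmap IH IB gH gB W)))))"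
    by (intro lin_basic lin_loc sp_zB p)
  show "lin_on (tidx IH IB) (tidx (tidx IH IB) IB) (\<lambda>W. T1 (tmap (tidx IB IH) IB phi id (assocL (tvec p W))))"
    by (intro lin_basic lin_loc p lin_tmap)
  fix i j assume ij: "i \<in> IH" "j \<in> IB"
  show "tmap (tidx IB IH) IB Phi id (assocL (tvec (zB (n + 1) p) (tmap IH IB id (zB n) (tmap IH IB gH gB (tvec (bv i) (bv j)))))) =
        T1 (tmap (tidx IB IH) IB phi id (assocL (tvec p (tvec (bv i) (bv j)))))"
    using ij p by simp
qed

lemma A1:
  assumes h: "h \<in> space IH" and Z: "Z \<in> space (tidx IB IB)"
  shows "tmap (tidx IB IH) IB Phi id (assocL (tmap IB (tidx IB IH) id Phi (assocR (tvec (tmap IB IB (zB (n + 1)) (zB n) Z) h))))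
       = T1 (tmap (tidx IB IH) IB phi id (assocL (tmap IB (tidx IB IH) id phi (assocR (tvec Z (aH (aH h)))))))"
proof (rule ext_lin2[OF finB finB _ _ _ Z])
  show "lin_on (tidx IB IB) (tidx (tidx IH IB) IB) (\<lambda>Z. tmap (tidx IB IH) IB Phi id (assocL (tmap IB (tidx IB IH) id Phi (assocR (tvec (tmap IB IB (zB (n + 1)) (zB n) Z) h)))))"
    by (intro lin_basic lin_loc h)
  show "lin_on (tidx IB IB) (tidx (tidx IH IB) IB) (\<lambda>Z. T1 (tmap (tidx IB IH) IB phi id (assocL (tmap IB (tidx IB IH) id phi (assocR (tvec Z (aH (aH h))))))))"
    by (intro lin_basic lin_loc sp_aH h lin_tmap)
  fix i j assume ij: "i \<in> IB" "j \<in> IB"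
  let ?W = "phi (tvec (bv j) (aH (aH h)))"
  have W: "?W \<in> space (tidx IH IB)" using ij h by simp
  have e: "Phi (tvec (zB n (bv j)) h) = tmap IH IB id (zB n) (tmap IH IB gH gB ?W)"
    using ij h by (simp add: phi_m1)
  show "tmap (tidx IB IH) IB Phi id (assocL (tmap IB (tidx IB IH) id Phi (assocR (tvec (tmap IB IB (zB (n + 1)) (zB n) (tvec (bv i) (bv j))) h)))) =
        T1 (tmap (tidx IB IH) IB phi id (assocL (tmap IB (tidx IB IH) id phi (assocR (tvec (tvec (bv i) (bv j)) (aH (aH h)))))))"
    using ij h A2[OF _ W, of "bv i"] e by simp
qed

lemma B1:
  assumes W: "W \<in> space (tidx IH IB)"
  shows "assocL (tmap IH IB aH tauB (tmap IH IB id (zB n) W)) = T1 (assocL (tmap IH IB aH DB W))"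
proof (rule ext_lin2[OF finH finB _ _ _ W])
  show "lin_on (tidx IH IB) (tidx (tidx IH IB) IB) (\<lambda>W. assocL (tmap IH IB aH tauB (tmap IH IB id (zB n) W)))"
    by (intro lin_basic lin_loc)
  show "lin_on (tidx IH IB) (tidx (tidx IH IB) IB) (\<lambda>W. T1 (assocL (tmap IH IB aH DB W)))"
    by (intro lin_basic lin_loc lin_tmap)
  fix i j assume ij: "i \<in> IH" "j \<in> IB"
  have "assocL (tvec (id (aH (bv i))) (tmap IB IB (zB n) (zB (n - 1)) (DB (bv j))))
     = T1 (assocL (tvec (aH (bv i)) (DB (bv j))))"
    by (rule aL_nat1[where J'=IB and K'=IB and I'=IH]) (use ij in \<open>auto simp: lin_idL\<close>)
  then show "assocL (tmap IH IB aH tauB (tmap IH IB id (zB n) (tvec (bv i) (bv j)))) = T1 (assocL (tmap IH IB aH DB (tvec (bv i) (bv j))))"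
    using ij by (simp add: tauB_z)
qed

lemma K1L_eq: "c \<in> space IB \<Longrightarrow> h \<in> space IH \<Longrightarrow> K1L (tvec (zB (n + 1) c) h) = T1 (M1L c (aH h))"
  using A1[of h "DB c"] by (simp add: K1L_def M1L_def tauB_z)

lemma K1R_eq: "c \<in> space IB \<Longrightarrow> h \<in> space IH \<Longrightarrow> K1R (tvec (zB (n + 1) c) h) = T1 (M1R c (aH h))"
  using B1[of "phi (tvec c (aH h))"] by (simp add: K1R_def M1R_def)

lemma K1_iff: "(\<forall>b\<in>space IB. \<forall>h\<in>space IH. K1L (tvec b h) = K1R (tvec b h))
   \<longleftrightarrow> (\<forall>b\<in>space IB. \<forall>h\<in>space IH. M1L b h = M1R b h)"
proof
  assume M: "\<forall>b\<in>space IB. \<forall>h\<in>space IH. M1L b h = M1R b h"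
  show "\<forall>b\<in>space IB. \<forall>h\<in>space IH. K1L (tvec b h) = K1R (tvec b h)"
  proof (intro ballI)
    fix b h :: "'k vec" assume b: "b \<in> space IB" and h: "h \<in> space IH"
    have bb: "b = zB (n + 1) (zB (- n - 1) b)" using b by simp
    show "K1L (tvec b h) = K1R (tvec b h)"
      using K1L_eq[of "zB (- n - 1) b" h] K1R_eq[of "zB (- n - 1) b" h] M b h bb by auto
  qed
next
  assume K: "\<forall>b\<in>space IB. \<forall>h\<in>space IH. K1L (tvec b h) = K1R (tvec b h)"
  show "\<forall>b\<in>space IB. \<forall>h\<in>space IH. M1L b h = M1R b h"
  proof (intro ballI)
    fix b h :: "'k vec" assume b: "b \<in> space IB" and h: "h \<in> space IH"
    have "T1 (M1L b (aH (gH h))) = T1 (M1R b (aH (gH h)))"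
      using K1L_eq[of b "gH h"] K1R_eq[of b "gH h"] K b h by simp
    then have "T1 (M1L b h) = T1 (M1R b h)" using h by simp
    then have "T1i (T1 (M1L b h)) = T1i (T1 (M1R b h))" by simp
    then show "M1L b h = M1R b h" using T1_inj sp_M1L[OF b h] sp_M1R[OF b h] by simp
  qed
qed

end

context Setup
begin

definition K2L where "K2L w = assocL (tmap IH (tidx IB IH) id Phi (assocR (tmap (tidx IB IH) IH Phi id (assocL (tmap IB IH aB tauH w)))))"
definition K2R where "K2R w = tmap IH IB tauH id (Phi w)"

context
  fixes I :: "ix set" and a :: "'k vec \<Rightarrow> 'k vec"
  assumes oX: "is_obj I a"
begin

lemma fX[simp]: "finite I" by (rule finX[OF oX])
lemma lX[simp]: "lin_on I I a" by (rule laX[OF oX])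
lemma lnX[simp]: "linear_on I a" by (rule ln_aX[OF oX])
lemma sX[simp]: "v \<in> space I \<Longrightarrow> a v \<in> space I" by (rule sp_aX[OF oX])

lemma T1a:
  assumes x: "x \<in> space I" and P: "P \<in> space (tidx IH IB)" and q: "q \<in> space IH"
  shows "Psi (tidx I IH) c (tvec (assocL (tvec x P)) q) = Rf I IH IH IB x (assocL (tmap IH (tidx IB IH) id Phi (assocR (tvec P q))))"
proof (rule ext_lin2[OF finH finB _ _ _ P])
  show "lin_on (tidx IH IB) (tidx (tidx (tidx I IH) IH) IB) (\<lambda>P. Psi (tidx I IH) c (tvec (assocL (tvec x P)) q))"
    by (intro lPsiL lin_basic x q)
  show "lin_on (tidx IH IB) (tidx (tidx (tidx I IH) IH) IB) (\<lambda>P. Rf I IH IH IB x (assocL (tmap IH (tidx IB IH) id Phi (assocR (tvec P q)))))"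
    by (intro lin_basic lin_loc x q)
  fix i j assume ij: "i \<in> IH" "j \<in> IB"
  have "Rf I IH IH IB x (assocL (tvec (bv i) (Phi (tvec (bv j) q)))) = assocL (tvec (tvec x (bv i)) (Phi (tvec (bv j) q)))"
    by (rule pent1) (use ij x q in auto)
  then show "Psi (tidx I IH) c (tvec (assocL (tvec x (tvec (bv i) (bv j)))) q) =
        Rf I IH IH IB x (assocL (tmap IH (tidx IB IH) id Phi (assocR (tvec (tvec (bv i) (bv j)) q))))"
    using ij x q by simp
qed

lemma T1:
  assumes x: "x \<in> space I" and b: "b \<in> space IB" and Z: "Z \<in> space (tidx IH IH)"
  shows "Psi (tidx I IH) c (tmap (tidx (tidx I IB) IH) IH (Psi I a) id (assocL (tvec (tvec x b) Z)))
       = Rf I IH IH IB x (assocL (tmap IH (tidx IB IH) id Phi (assocR (tmap (tidx IB IH) IH Phi id (assocL (tvec b Z))))))"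
proof (rule ext_lin2[OF finH finH _ _ _ Z])
  show "lin_on (tidx IH IH) (tidx (tidx (tidx I IH) IH) IB) (\<lambda>Z. Psi (tidx I IH) c (tmap (tidx (tidx I IB) IH) IH (Psi I a) id (assocL (tvec (tvec x b) Z))))"
    by (intro lPsiL lin_basic lPsi x b tvec_space)
  show "lin_on (tidx IH IH) (tidx (tidx (tidx I IH) IH) IB) (\<lambda>Z. Rf I IH IH IB x (assocL (tmap IH (tidx IB IH) id Phi (assocR (tmap (tidx IB IH) IH Phi id (assocL (tvec b Z)))))))"
    by (intro lin_basic lin_loc x b)
  fix i j assume ij: "i \<in> IH" "j \<in> IH"
  show "Psi (tidx I IH) c (tmap (tidx (tidx I IB) IH) IH (Psi I a) id (assocL (tvec (tvec x b) (tvec (bv i) (bv j))))) =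
        Rf I IH IH IB x (assocL (tmap IH (tidx IB IH) id Phi (assocR (tmap (tidx IB IH) IH Phi id (assocL (tvec b (tvec (bv i) (bv j))))))))"
    using ij x b T1a[OF x sp_Phi[OF tvec_space[OF b bv_space[OF ij(1)]]] bv_space[OF ij(2)]] by simp
qed

lemma T2:
  assumes x: "x \<in> space I" and P: "P \<in> space (tidx IH IB)"
  shows "tmap (tidx I IH) IB (ccomult IH aH DH I a) id (assocL (tvec x P)) = Rf I IH IH IB (a x) (tmap IH IB tauH id P)"
proof (rule ext_lin2[OF finH finB _ _ _ P])
  show "lin_on (tidx IH IB) (tidx (tidx (tidx I IH) IH) IB) (\<lambda>P. tmap (tidx I IH) IB (ccomult IH aH DH I a) id (assocL (tvec x P)))"
    by (intro lin_basic lcomH[OF oX] x)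
  show "lin_on (tidx IH IB) (tidx (tidx (tidx I IH) IH) IB) (\<lambda>P. Rf I IH IH IB (a x) (tmap IH IB tauH id P))"
    by (intro lin_basic lin_loc x sX)
  fix i j assume ij: "i \<in> IH" "j \<in> IB"
  show "tmap (tidx I IH) IB (ccomult IH aH DH I a) id (assocL (tvec x (tvec (bv i) (bv j)))) =
        Rf I IH IH IB (a x) (tmap IH IB tauH id (tvec (bv i) (bv j)))"
    using ij x by (simp add: comH_tvec[OF oX])
qed

lemma ax2_L:
  assumes x: "x \<in> space I" and b: "b \<in> space IB" and h: "h \<in> space IH"
  shows "Psi (tidx I IH) (tmap I IH a aH) (tmap (tidx (tidx I IB) IH) IH (Psi I a) id
            (ccomult IH aH DH (tidx I IB) (tmap I IB a aB) (tvec (tvec x b) h)))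
         = Rf I IH IH IB (a x) (K2L (tvec b h))"
proof -
  have "ccomult IH aH DH (tidx I IB) (tmap I IB a aB) (tvec (tvec x b) h) = assocL (tvec (tvec (a x) (aB b)) (tauH h))"
    using ccomult_tvec[OF _ finH oH lDH lin_tmap[OF lX laB], of "tvec x b" h] x b h
    by (simp add: tauH_def)
  then show ?thesis using T1[of "a x" "aB b" "tauH h"] x b h by (simp add: K2L_def)
qed

lemma ax2_R:
  assumes x: "x \<in> space I" and b: "b \<in> space IB" and h: "h \<in> space IH"
  shows "tmap (tidx I IH) IB (ccomult IH aH DH I a) id (Psi I a (tvec (tvec x b) h))
         = Rf I IH IH IB (a x) (K2R (tvec b h))"
  using T2[OF x sp_Phi[OF tvec_space[OF b h]]] x b h by (simp add: K2R_def)

end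

definition M2L where "M2L b h = assocL (tmap IH (tidx IB IH) id phi (assocR (tmap (tidx IB IH) IH phi id (assocL (tvec (aB b) (DH h))))))"
definition M2R where "M2R b h = tmap IH IB DH aB (phi (tvec b h))"

lemma sp_M2L: "b \<in> space IB \<Longrightarrow> h \<in> space IH \<Longrightarrow> M2L b h \<in> space (tidx (tidx IH IH) IB)"
  by (simp add: M2L_def)
lemma sp_M2R: "b \<in> space IB \<Longrightarrow> h \<in> space IH \<Longrightarrow> M2R b h \<in> space (tidx (tidx IH IH) IB)"
  by (simp add: M2R_def)

abbreviation "T2m \<equiv> tmap (tidx IH IH) IB (tmap IH IH aH id) (zB n)"
abbreviation "T2mi \<equiv> tmap (tidx IH IH) IB (tmap IH IH gH id) (zB (- n))"

lemma T2m_inj: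
  assumes V: "V \<in> space (tidx (tidx IH IH) IB)"
  shows "T2mi (T2m V) = V"
proof (rule tmap_inv[OF _ finB _ _ _ _ _ _ V])
  fix v :: "'k vec" assume v: "v \<in> space (tidx IH IH)"
  show "tmap IH IH gH id (tmap IH IH aH id v) = v"
    by (rule tmap_inv[OF finH finH _ _ _ _ _ _ v]) auto
qed (auto intro: lin_tmap)

lemma phi_p1:
  assumes c: "c \<in> space IB" and p: "p \<in> space IH"
  shows "phi (tvec (zB 1 c) (aH p)) = tmap IH IB aH aB (phi (tvec c p))"
proof -
  have "phi (tmap IB IH aB aH (tvec c p)) = tmap IH IB aH aB (phi (tvec c p))"
    by (rule phic[rule_format]) (simp add: c p)
  then show ?thesis using c p by (simp add: zpow_1)
qed

lemma E1:
  assumes W: "W \<in> space (tidx IH IB)"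
  shows "tmap IH IB id (zB n) (tmap IH IB aH aB W) = tmap IH IB aH (zB (n + 1)) W"
proof -
  have "tmap IH IB id (zB n) (tmap IH IB aH aB W) = tmap IH IB (\<lambda>x. id (aH x)) (\<lambda>y. zB n (aB y)) W"
    by (rule tmap_comp[where I''=IH and J''=IB]) (simp_all add: W)
  also have "\<dots> = tmap IH IB aH (zB (n + 1)) W"
    by (rule arg_cong[where f = "\<lambda>h. h W"], rule tmap_cong) auto
  finally show ?thesis .
qed

lemma C2:
  assumes q: "q \<in> space IH" and W: "W \<in> space (tidx IH IB)"
  shows "assocL (tmap IH (tidx IB IH) id Phi (assocR (tvec (tmap IH IB aH (zB (n + 1)) W) (gH q))))
       = T2m (assocL (tmap IH (tidx IB IH) id phi (assocR (tvec W q))))"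
proof (rule ext_lin2[OF finH finB _ _ _ W])
  show "lin_on (tidx IH IB) (tidx (tidx IH IH) IB) (\<lambda>W. assocL (tmap IH (tidx IB IH) id Phi (assocR (tvec (tmap IH IB aH (zB (n + 1)) W) (gH q)))))"
    by (intro lin_basic lin_loc sp_gH q)
  show "lin_on (tidx IH IB) (tidx (tidx IH IH) IB) (\<lambda>W. T2m (assocL (tmap IH (tidx IB IH) id phi (assocR (tvec W q)))))"
    by (intro lin_basic lin_loc q lin_tmap)
  fix i j assume ij: "i \<in> IH" "j \<in> IB"
  have "assocL (tvec (aH (bv i)) (tmap IH IB id (zB n) (phi (tvec (bv j) q))))
     = T2m (assocL (tvec (bv i) (phi (tvec (bv j) q))))"
    by (rule aL_nat1[where J'=IH and K'=IB and I'=IH]) (use ij q in \<open>auto simp: lin_idL\<close>)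
  then show "assocL (tmap IH (tidx IB IH) id Phi (assocR (tvec (tmap IH IB aH (zB (n + 1)) (tvec (bv i) (bv j))) (gH q)))) =
        T2m (assocL (tmap IH (tidx IB IH) id phi (assocR (tvec (tvec (bv i) (bv j)) q))))"
    using ij q by simp
qed

lemma C1:
  assumes c: "c \<in> space IB" and Z: "Z \<in> space (tidx IH IH)"
  shows "assocL (tmap IH (tidx IB IH) id Phi (assocR (tmap (tidx IB IH) IH Phi id (assocL (tvec (zB (n + 2) c) (tmap IH IH id gH Z))))))
       = T2m (assocL (tmap IH (tidx IB IH) id phi (assocR (tmap (tidx IB IH) IH phi id (assocL (tvec c Z))))))"
proof (rule ext_lin2[OF finH finH _ _ _ Z])
  show "lin_on (tidx IH IH) (tidx (tidx IH IH) IB) (\<lambda>Z. assocL (tmap IH (tidx IB IH) id Phi (assocR (tmap (tidx IB IH) IH Phi id (assocL (tvec (zB (n + 2) c) (tmap IH IH id gH Z)))))))"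
    by (intro lin_basic lin_loc sp_zB c)
  show "lin_on (tidx IH IH) (tidx (tidx IH IH) IB) (\<lambda>Z. T2m (assocL (tmap IH (tidx IB IH) id phi (assocR (tmap (tidx IB IH) IH phi id (assocL (tvec c Z)))))))"
    by (intro lin_basic lin_loc c lin_tmap)
  fix i j assume ij: "i \<in> IH" "j \<in> IH"
  let ?W = "phi (tvec c (bv i))"
  have W: "?W \<in> space (tidx IH IB)" using ij c by simp
  have "Phi (tvec (zB (n + 2) c) (bv i)) = tmap IH IB id (zB n) (phi (tvec (zB 1 c) (aH (bv i))))"
    using ij c by simp
  also have "\<dots> = tmap IH IB aH (zB (n + 1)) ?W"
    using ij c by (simp add: phi_p1 E1)
  finally have e: "Phi (tvec (zB (n + 2) c) (bv i)) = tmap IH IB aH (zB (n + 1)) ?W" .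
  show "assocL (tmap IH (tidx IB IH) id Phi (assocR (tmap (tidx IB IH) IH Phi id (assocL (tvec (zB (n + 2) c) (tmap IH IH id gH (tvec (bv i) (bv j)))))))) =
        T2m (assocL (tmap IH (tidx IB IH) id phi (assocR (tmap (tidx IB IH) IH phi id (assocL (tvec c (tvec (bv i) (bv j))))))))"
    using ij c e C2[OF _ W, of "bv j"] by simp
qed

lemma K2L_eq: "d \<in> space IB \<Longrightarrow> h \<in> space IH \<Longrightarrow> K2L (tvec (zB (n + 2) d) h) = T2m (M2L d h)"
  using C1[of "aB d" "DH h"] by (simp add: K2L_def M2L_def tauH_def)

lemma K2R_eq:
  assumes d: "d \<in> space IB" and h: "h \<in> space IH"
  shows "K2R (tvec (zB (n + 2) d) h) = T2m (M2R d h)"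
proof -
  let ?W = "phi (tvec d h)"
  have W: "?W \<in> space (tidx IH IB)" using d h by simp
  have "K2R (tvec (zB (n + 2) d) h) = tmap IH IB tauH id (tmap IH IB id (zB n) (phi (tvec (zB 1 d) (aH h))))"
    using d h by (simp add: K2R_def)
  also have "\<dots> = tmap IH IB tauH id (tmap IH IB aH (zB (n + 1)) ?W)"
    using d h by (simp add: phi_p1 E1)
  also have "\<dots> = tmap IH IB (\<lambda>x. tauH (aH x)) (\<lambda>y. id (zB (n + 1) y)) ?W"
    by (rule tmap_comp[where I''="tidx IH IH" and J''=IB]) (simp_all add: W)
  also have "\<dots> = tmap IH IB (\<lambda>x. tmap IH IH aH id (DH x)) (\<lambda>y. zB n (aB y)) ?W"
    by (rule arg_cong[where f = "\<lambda>h. h ?W"], rule tmap_cong) (auto simp: tauH_aH id_def)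
  also have "\<dots> = T2m (M2R d h)"
    unfolding M2R_def
    by (rule tmap_comp[where I''="tidx IH IH" and J''=IB, symmetric]) (simp_all add: W lin_tmap lin_idL)
  finally show ?thesis .
qed

lemma K2_iff: "(\<forall>b\<in>space IB. \<forall>h\<in>space IH. K2L (tvec b h) = K2R (tvec b h))
   \<longleftrightarrow> (\<forall>b\<in>space IB. \<forall>h\<in>space IH. M2L b h = M2R b h)"
proof
  assume M: "\<forall>b\<in>space IB. \<forall>h\<in>space IH. M2L b h = M2R b h"
  show "\<forall>b\<in>space IB. \<forall>h\<in>space IH. K2L (tvec b h) = K2R (tvec b h)"
  proof (intro ballI)
    fix b h :: "'k vec" assume b: "b \<in> space IB" and h: "h \<in> space IH"
    have bb: "b = zB (n + 2) (zB (- n - 2) b)" using b by simp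
    show "K2L (tvec b h) = K2R (tvec b h)"
      using K2L_eq[of "zB (- n - 2) b" h] K2R_eq[of "zB (- n - 2) b" h] M b h bb by auto
  qed
next
  assume K: "\<forall>b\<in>space IB. \<forall>h\<in>space IH. K2L (tvec b h) = K2R (tvec b h)"
  show "\<forall>b\<in>space IB. \<forall>h\<in>space IH. M2L b h = M2R b h"
  proof (intro ballI)
    fix b h :: "'k vec" assume b: "b \<in> space IB" and h: "h \<in> space IH"
    have "T2m (M2L b h) = T2m (M2R b h)"
      using K2L_eq[of b h] K2R_eq[of b h] K b h by simp
    then have "T2mi (T2m (M2L b h)) = T2mi (T2m (M2R b h))" by simp
    then show "M2L b h = M2R b h" using T2m_inj sp_M2L[OF b h] sp_M2R[OF b h] by simp
  qed
qed

end

lemma lin_smul_app: "lin_on I J f \<Longrightarrow> v \<in> space I \<Longrightarrow> f (smul c v) = smul c (f v)"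
  by (simp add: lin_on_def)

context Setup
begin

definition CH where "CH w = lin2 IH IB (\<lambda>y x. smul (eH y) x) w"
definition CB where "CB w = lin2 IH IB (\<lambda>y x. smul (eB x) y) w"

lemma lCH: "lin_on (tidx IH IB) IB CH"
  unfolding CH_def[abs_def] by (rule lin_lin2) simp
lemma lCB: "lin_on (tidx IH IB) IH CB"
  unfolding CB_def[abs_def] by (rule lin_lin2) simp
lemma sp_CH[simp]: "w \<in> space (tidx IH IB) \<Longrightarrow> CH w \<in> space IB" by (rule lin_onD[OF lCH])
lemma sp_CB[simp]: "w \<in> space (tidx IH IB) \<Longrightarrow> CB w \<in> space IH" by (rule lin_onD[OF lCB])
lemma lCHL: "lin_on I (tidx IH IB) F \<Longrightarrow> lin_on I IB (\<lambda>v. CH (F v))" by (rule lin_appL[OF _ lCH])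
lemma lCBL: "lin_on I (tidx IH IB) F \<Longrightarrow> lin_on I IH (\<lambda>v. CB (F v))" by (rule lin_appL[OF _ lCB])

lemma CH_tvec[simp]: "r \<in> space IH \<Longrightarrow> s \<in> space IB \<Longrightarrow> CH (tvec r s) = smul (eH r) s"
  unfolding CH_def
  by (rule lin2_tvec) (use leH in \<open>auto simp: linear_on_def lin_functional_def smul_add smul_mult smul_vadd smul_smul_comm\<close>)
lemma CB_tvec[simp]: "r \<in> space IH \<Longrightarrow> s \<in> space IB \<Longrightarrow> CB (tvec r s) = smul (eB s) r"
  unfolding CB_def
  by (rule lin2_tvec) (use leB in \<open>auto simp: linear_on_def lin_functional_def smul_add smul_mult smul_vadd smul_smul_comm\<close>)

lemma zB_smul[simp]: "v \<in> space IB \<Longrightarrow> zB m (smul c v) = smul c (zB m v)" by (rule lin_smul_app[OF lzB])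
lemma gH_smul[simp]: "v \<in> space IH \<Longrightarrow> gH (smul c v) = smul c (gH v)" by (rule lin_smul_app[OF lgH])
lemma aH_smul[simp]: "v \<in> space IH \<Longrightarrow> aH (smul c v) = smul c (aH v)" by (rule lin_smul_app[OF laH])

lemma CH_nat:
  assumes W: "W \<in> space (tidx IH IB)"
  shows "CH (tmap IH IB id (zB m) W) = zB m (CH W)"
proof (rule ext_lin2[OF finH finB _ _ _ W])
  show "lin_on (tidx IH IB) IB (\<lambda>W. CH (tmap IH IB id (zB m) W))" by (intro lCHL lin_basic lin_loc)
  show "lin_on (tidx IH IB) IB (\<lambda>W. zB m (CH W))" by (intro lzBL lCHL lin_basic)
qed simp

lemma CB_nat:
  assumes W: "W \<in> space (tidx IH IB)"
  shows "CB (tmap IH IB id (zB m) W) = CB W"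
proof (rule ext_lin2[OF finH finB _ _ _ W])
  show "lin_on (tidx IH IB) IH (\<lambda>W. CB (tmap IH IB id (zB m) W))" by (intro lCBL lin_basic lin_loc)
  show "lin_on (tidx IH IB) IH (\<lambda>W. CB W)" by (intro lCBL lin_basic)
qed simp

context
  fixes I :: "ix set" and a :: "'k vec \<Rightarrow> 'k vec"
  assumes oX: "is_obj I a"
begin

lemma fX7[simp]: "finite I" by (rule finX[OF oX])
lemma lX7[simp]: "lin_on I I a" by (rule laX[OF oX])
lemma lnX7[simp]: "linear_on I a" by (rule ln_aX[OF oX])
lemma sX7[simp]: "v \<in> space I \<Longrightarrow> a v \<in> space I" by (rule sp_aX[OF oX])

abbreviation "gX \<equiv> inv_into (space I) a"
lemma lgX[simp]: "lin_on I I gX" by (rule obj_inv_lin[OF oX])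
lemma sgX[simp]: "v \<in> space I \<Longrightarrow> gX v \<in> space I" by (rule lin_onD[OF lgX])
lemma lngX[simp]: "linear_on I gX" by (rule lin_on_linear[OF lgX])

lemma U1:
  assumes x: "x \<in> space I" and P: "P \<in> space (tidx IH IB)"
  shows "tmap (tidx I IH) IB (ccounit IH eH I a) id (assocL (tvec x P)) = tvec (gX x) (CH P)"
proof (rule ext_lin2[OF finH finB _ _ _ P])
  show "lin_on (tidx IH IB) (tidx I IB) (\<lambda>P. tmap (tidx I IH) IB (ccounit IH eH I a) id (assocL (tvec x P)))"
    by (intro lin_basic lin_ccounit[OF oX] x)
  show "lin_on (tidx IH IB) (tidx I IB) (\<lambda>P. tvec (gX x) (CH P))"
    by (intro lin_basic lCHL sgX x)
  fix i j assume ij: "i \<in> IH" "j \<in> IB"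
  show "tmap (tidx I IH) IB (ccounit IH eH I a) id (assocL (tvec x (tvec (bv i) (bv j)))) = tvec (gX x) (CH (tvec (bv i) (bv j)))"
    using ij x by (simp add: ccounit_tvec[OF fX7 finH leH oX] tvec_smul1 tvec_smul2)
qed

lemma U2:
  assumes x: "x \<in> space I" and P: "P \<in> space (tidx IH IB)"
  shows "ccounit IB eB (tidx I IH) (tmap I IH a aH) (assocL (tvec x P)) = tvec (gX x) (gH (CB P))"
proof (rule ext_lin2[OF finH finB _ _ _ P])
  show "lin_on (tidx IH IB) (tidx I IH) (\<lambda>P. ccounit IB eB (tidx I IH) (tmap I IH a aH) (assocL (tvec x P)))"
    by (intro lin_appL[OF _ lin_ccounit[OF obj_tmap(1)[OF oX oH]]] lin_basic x)
  show "lin_on (tidx IH IB) (tidx I IH) (\<lambda>P. tvec (gX x) (gH (CB P)))"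
    by (intro lin_basic lCBL lgHL sgX x)
  fix i j assume ij: "i \<in> IH" "j \<in> IB"
  have "ccounit IB eB (tidx I IH) (tmap I IH a aH) (tvec (tvec x (bv i)) (bv j))
      = smul (eB (bv j)) (inv_into (space (tidx I IH)) (tmap I IH a aH) (tvec x (bv i)))"
    by (rule ccounit_tvec[OF _ finB leB obj_tmap(1)[OF oX oH]]) (use ij x in auto)
  also have "\<dots> = smul (eB (bv j)) (tmap I IH gX gH (tvec x (bv i)))"
    using obj_tmap(2)[OF oX oH, of "tvec x (bv i)"] ij x by simp
  finally show "ccounit IB eB (tidx I IH) (tmap I IH a aH) (assocL (tvec x (tvec (bv i) (bv j)))) = tvec (gX x) (gH (CB (tvec (bv i) (bv j))))"
    using ij x by (simp add: tvec_smul1 tvec_smul2)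
qed

lemma ax3_L:
  assumes x: "x \<in> space I" and b: "b \<in> space IB" and h: "h \<in> space IH"
  shows "tmap (tidx I IH) IB (ccounit IH eH I a) id (Psi I a (tvec (tvec x b) h)) = tvec (gX x) (CH (Phi (tvec b h)))"
  using U1[OF x sp_Phi[OF tvec_space[OF b h]]] x b h by simp

lemma ax3_R:
  assumes x: "x \<in> space I" and b: "b \<in> space IB" and h: "h \<in> space IH"
  shows "ccounit IH eH (tidx I IB) (tmap I IB a aB) (tvec (tvec x b) h) = tvec (gX x) (smul (eH h) (gB b))"
proof -
  have "ccounit IH eH (tidx I IB) (tmap I IB a aB) (tvec (tvec x b) h)
      = smul (eH h) (inv_into (space (tidx I IB)) (tmap I IB a aB) (tvec x b))"
    by (rule ccounit_tvec[OF _ finH leH obj_tmap(1)[OF oX oB]]) (use x b h in auto)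
  also have "\<dots> = smul (eH h) (tmap I IB gX gB (tvec x b))"
    using obj_tmap(2)[OF oX oB, of "tvec x b"] x b by simp
  finally show ?thesis using x b by (simp add: tvec_smul1 tvec_smul2)
qed

lemma ax4_L:
  assumes x: "x \<in> space I" and b: "b \<in> space IB" and h: "h \<in> space IH"
  shows "ccounit IB eB (tidx I IH) (tmap I IH a aH) (Psi I a (tvec (tvec x b) h)) = tvec (gX x) (gH (CB (Phi (tvec b h))))"
  using U2[OF x sp_Phi[OF tvec_space[OF b h]]] x b h by simp

lemma ax4_R:
  assumes x: "x \<in> space I" and b: "b \<in> space IB" and h: "h \<in> space IH"
  shows "tmap (tidx I IB) IH (ccounit IB eB I a) id (tvec (tvec x b) h) = tvec (gX x) (smul (eB b) h)"
  using x b h by (simp add: ccounit_tvec[OF fX7 finB leB oX] tvec_smul1 tvec_smul2)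

end

lemma K3_iff: "(\<forall>b\<in>space IB. \<forall>h\<in>space IH. CH (Phi (tvec b h)) = smul (eH h) (gB b))
   \<longleftrightarrow> (\<forall>b\<in>space IB. \<forall>h\<in>space IH. lin2 IH IB (\<lambda>y x. smul (eH y) x) (phi (tvec b h)) = smul (eH h) b)"
proof
  assume M: "\<forall>b\<in>space IB. \<forall>h\<in>space IH. lin2 IH IB (\<lambda>y x. smul (eH y) x) (phi (tvec b h)) = smul (eH h) b"
  show "\<forall>b\<in>space IB. \<forall>h\<in>space IH. CH (Phi (tvec b h)) = smul (eH h) (gB b)"
  proof (intro ballI)
    fix b h :: "'k vec" assume b: "b \<in> space IB" and h: "h \<in> space IH"
    have "CH (Phi (tvec b h)) = zB n (CH (phi (tvec (zB (- n - 1) b) (aH h))))"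
      using b h by (simp add: CH_nat)
    also have "\<dots> = zB n (smul (eH h) (zB (- n - 1) b))"
      using M b h by (simp add: CH_def eHc)
    also have "\<dots> = smul (eH h) (gB b)" using b by (simp add: zpow_m1)
    finally show "CH (Phi (tvec b h)) = smul (eH h) (gB b)" .
  qed
next
  assume K: "\<forall>b\<in>space IB. \<forall>h\<in>space IH. CH (Phi (tvec b h)) = smul (eH h) (gB b)"
  show "\<forall>b\<in>space IB. \<forall>h\<in>space IH. lin2 IH IB (\<lambda>y x. smul (eH y) x) (phi (tvec b h)) = smul (eH h) b"
  proof (intro ballI)
    fix b h :: "'k vec" assume b: "b \<in> space IB" and h: "h \<in> space IH"
    have "CH (Phi (tvec (zB (n + 1) b) (gH h))) = smul (eH (gH h)) (gB (zB (n + 1) b))"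
      by (rule K[rule_format]) (simp_all add: b h)
    moreover have "CH (Phi (tvec (zB (n + 1) b) (gH h))) = zB n (CH (phi (tvec b h)))"
      using b h by (simp add: CH_nat)
    ultimately have "zB n (CH (phi (tvec b h))) = smul (eH h) (zB n b)" using b h by simp
    then have "zB (- n) (zB n (CH (phi (tvec b h)))) = zB (- n) (smul (eH h) (zB n b))" by simp
    then show "lin2 IH IB (\<lambda>y x. smul (eH y) x) (phi (tvec b h)) = smul (eH h) b"
      using b h by (simp add: CH_def[symmetric])
  qed
qed

lemma K4_iff: "(\<forall>b\<in>space IB. \<forall>h\<in>space IH. gH (CB (Phi (tvec b h))) = smul (eB b) h)
   \<longleftrightarrow> (\<forall>b\<in>space IB. \<forall>h\<in>space IH. lin2 IH IB (\<lambda>y x. smul (eB x) y) (phi (tvec b h)) = smul (eB b) h)"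
proof
  assume M: "\<forall>b\<in>space IB. \<forall>h\<in>space IH. lin2 IH IB (\<lambda>y x. smul (eB x) y) (phi (tvec b h)) = smul (eB b) h"
  show "\<forall>b\<in>space IB. \<forall>h\<in>space IH. gH (CB (Phi (tvec b h))) = smul (eB b) h"
  proof (intro ballI)
    fix b h :: "'k vec" assume b: "b \<in> space IB" and h: "h \<in> space IH"
    have "CB (Phi (tvec b h)) = CB (phi (tvec (zB (- n - 1) b) (aH h)))"
      using b h by (simp add: CB_nat)
    also have "\<dots> = smul (eB b) (aH h)"
      using M b h by (simp add: CB_def)
    finally show "gH (CB (Phi (tvec b h))) = smul (eB b) h" using b h by simp
  qed
next
  assume K: "\<forall>b\<in>space IB. \<forall>h\<in>space IH. gH (CB (Phi (tvec b h))) = smul (eB b) h"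
  show "\<forall>b\<in>space IB. \<forall>h\<in>space IH. lin2 IH IB (\<lambda>y x. smul (eB x) y) (phi (tvec b h)) = smul (eB b) h"
  proof (intro ballI)
    fix b h :: "'k vec" assume b: "b \<in> space IB" and h: "h \<in> space IH"
    have "gH (CB (Phi (tvec (zB (n + 1) b) (gH h)))) = smul (eB (zB (n + 1) b)) (gH h)"
      by (rule K[rule_format]) (simp_all add: b h)
    moreover have "CB (Phi (tvec (zB (n + 1) b) (gH h))) = CB (phi (tvec b h))"
      using b h by (simp add: CB_nat)
    ultimately have "gH (CB (phi (tvec b h))) = smul (eB b) (gH h)" using b h by simp
    then have "aH (gH (CB (phi (tvec b h)))) = aH (smul (eB b) (gH h))" by simp
    then show "lin2 IH IB (\<lambda>y x. smul (eB x) y) (phi (tvec b h)) = smul (eB b) h"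
      using b h by (simp add: CB_def[symmetric])
  qed
qed

end

lemma tvec_inj0:
  fixes Q Q' :: "'k::comm_ring_1 vec"
  assumes "tvec (bv i) Q = tvec (bv i) Q'" shows "Q = Q'"
proof
  fix t
  have "tvec (bv i) Q (Tn i t) = tvec (bv i) Q' (Tn i t)" using assms by simp
  then show "Q t = Q' t" by (simp add: tvec_def bv_def)
qed

lemma obj0: "is_obj {Ix 0} (id :: 'k::comm_ring_1 vec \<Rightarrow> _)"
  unfolding is_obj_def by (simp add: lin_id)

lemma g0: "inv_into (space {Ix 0}) id (bv (Ix 0)) = (bv (Ix 0) :: 'k::comm_ring_1 vec)"
  using obj_ga[OF obj0, of "bv (Ix 0) :: 'k vec"] by simp

lemma Rf_inj:
  fixes Q Q' :: "'k::comm_ring_1 vec"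
  assumes fin: "finite J" "finite K" "finite L"
    and Q: "Q \<in> space (tidx (tidx J K) L)" and Q': "Q' \<in> space (tidx (tidx J K) L)"
    and e: "Rf {Ix 0} J K L (bv (Ix 0)) Q = Rf {Ix 0} J K L (bv (Ix 0)) Q'"
  shows "Q = Q'"
proof -
  let ?I = "{Ix 0}" and ?e = "bv (Ix 0) :: 'k vec"
  have e0: "?e \<in> space ?I" by simp
  have bck: "tmap (tidx (tidx ?I J) K) L assocR id (Rf ?I J K L ?e X) = assocL (tvec ?e X)"
    if X: "X \<in> space (tidx (tidx J K) L)" for X
  proof -
    let ?V = "assocL (tvec ?e X)"
    have V: "?V \<in> space (tidx (tidx ?I (tidx J K)) L)" using X e0 by simp
    have "tmap (tidx (tidx ?I J) K) L assocR id (tmap (tidx ?I (tidx J K)) L assocL id ?V)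
        = tmap (tidx ?I (tidx J K)) L (\<lambda>x. assocR (assocL x)) (\<lambda>y. id (id y)) ?V"
      by (rule tmap_comp[where I''="tidx ?I (tidx J K)" and J''=L]) (use fin V in \<open>simp_all add: lin_assocL lin_assocR lin_id\<close>)
    also have "\<dots> = tmap (tidx ?I (tidx J K)) L id id ?V"
      by (rule arg_cong[where f = "\<lambda>h. h ?V"], rule tmap_cong) (auto intro: assocR_L[OF bv_space])
    also have "\<dots> = ?V" by (rule tmap_id) (use fin V in simp_all)
    finally show ?thesis .
  qed
  have "assocL (tvec ?e Q) = tmap (tidx (tidx ?I J) K) L assocR id (Rf ?I J K L ?e Q)" by (rule bck[OF Q, symmetric])
  also have "\<dots> = tmap (tidx (tidx ?I J) K) L assocR id (Rf ?I J K L ?e Q')" by (simp only: e)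
  also have "\<dots> = assocL (tvec ?e Q')" by (rule bck[OF Q'])
  finally have "assocL (tvec ?e Q) = assocL (tvec ?e Q')" .
  then have "assocR (assocL (tvec ?e Q)) = assocR (assocL (tvec ?e Q'))" by simp
  moreover have "tvec ?e Q \<in> space (tidx ?I (tidx (tidx J K) L))" by (rule tvec_space[OF e0 Q])
  moreover have "tvec ?e Q' \<in> space (tidx ?I (tidx (tidx J K) L))" by (rule tvec_space[OF e0 Q'])
  ultimately have "tvec ?e Q = tvec ?e Q'" by (simp only: assocR_L)
  then show ?thesis by (rule tvec_inj0)
qed

context Setup
begin

lemma sp_K1L[simp]: "w \<in> space (tidx IB IH) \<Longrightarrow> K1L w \<in> space (tidx (tidx IH IB) IB)" by (simp add: K1L_def)
lemma sp_K1R[simp]: "w \<in> space (tidx IB IH) \<Longrightarrow> K1R w \<in> space (tidx (tidx IH IB) IB)" by (simp add: K1R_def)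
lemma sp_K2L[simp]: "w \<in> space (tidx IB IH) \<Longrightarrow> K2L w \<in> space (tidx (tidx IH IH) IB)" by (simp add: K2L_def)
lemma sp_K2R[simp]: "w \<in> space (tidx IB IH) \<Longrightarrow> K2R w \<in> space (tidx (tidx IH IH) IB)" by (simp add: K2R_def)

context
  fixes I :: "ix set" and a :: "'k vec \<Rightarrow> 'k vec"
  assumes oX: "is_obj I a"
begin

lemma fX8[simp]: "finite I" by (rule finX[OF oX])
lemma lX8[simp]: "lin_on I I a" by (rule laX[OF oX])
lemma lnX8[simp]: "linear_on I a" by (rule ln_aX[OF oX])
lemma sX8[simp]: "v \<in> space I \<Longrightarrow> a v \<in> space I" by (rule sp_aX[OF oX])

lemma hom_part:
  "is_hom (tidx (tidx I IB) IH) (tmap (tidx I IB) IH (tmap I IB a aB) aH)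
          (tidx (tidx I IH) IB) (tmap (tidx I IH) IB (tmap I IH a aH) aB) (Psi I a)"
  unfolding is_hom_def
proof (intro conjI ballI)
  show "lin_on (tidx (tidx I IB) IH) (tidx (tidx I IH) IB) (Psi I a)" by simp
  fix v :: "'k vec" assume v: "v \<in> space (tidx (tidx I IB) IH)"
  show "Psi I a (tmap (tidx I IB) IH (tmap I IB a aB) aH v) = tmap (tidx I IH) IB (tmap I IH a aH) aB (Psi I a v)"
  proof (rule ext_lin3[OF fX8 finB finH _ _ _ v])
    show "lin_on (tidx (tidx I IB) IH) (tidx (tidx I IH) IB) (\<lambda>v. Psi I a (tmap (tidx I IB) IH (tmap I IB a aB) aH v))"
      by (intro lPsiL lin_basic lX8 laB laH)
    show "lin_on (tidx (tidx I IB) IH) (tidx (tidx I IH) IB) (\<lambda>v. tmap (tidx I IH) IB (tmap I IH a aH) aB (Psi I a v))"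
      by (intro lin_tmapL lPsi lin_tmap lX8 laB laH)
    fix i j k assume ijk: "i \<in> I" "j \<in> IB" "k \<in> IH"
    let ?W = "phi (tvec (zB (- n - 1) (bv j)) (aH (bv k)))"
    have W: "?W \<in> space (tidx IH IB)" using ijk by simp
    have p: "phi (tvec (zB (- n) (bv j)) (aH (aH (bv k)))) = tmap IH IB aH aB ?W"
      using phic[rule_format, of "tvec (zB (- n - 1) (bv j)) (aH (bv k))"] ijk by simp
    have c1: "tmap IH IB aH aB (tmap IH IB id (zB n) ?W) = tmap IH IB (\<lambda>x. aH (id x)) (\<lambda>y. aB (zB n y)) ?W"
      by (rule tmap_comp[where I''=IH and J''=IB]) (simp_all add: W)
    have c2: "tmap IH IB (\<lambda>x. aH (id x)) (\<lambda>y. aB (zB n y)) ?W = tmap IH IB aH (zB (n + 1)) ?W"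
      by (rule arg_cong[where f = "\<lambda>h. h ?W"], rule tmap_cong) auto
    have "assocL (tvec (a (bv i)) (tmap IH IB aH aB (Phi (tvec (bv j) (bv k)))))
       = tmap (tidx I IH) IB (tmap I IH a aH) aB (assocL (tvec (bv i) (Phi (tvec (bv j) (bv k)))))"
      by (rule aL_nat1[where I'=I and J'=IH and K'=IB]) (use ijk in simp_all)
    then show "Psi I a (tmap (tidx I IB) IH (tmap I IB a aB) aH (tvec (tvec (bv i) (bv j)) (bv k))) =
          tmap (tidx I IH) IB (tmap I IH a aH) aB (Psi I a (tvec (tvec (bv i) (bv j)) (bv k)))"
      using ijk p c1 c2 by (simp add: E1 W)
  qed
qed

end

lemma nat_part:
  assumes oa: "is_obj I a" and ob: "is_obj J b" and f: "is_hom I a J b f"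
    and w: "w \<in> space (tidx (tidx I IB) IH)"
  shows "Psi J b (tmap (tidx I IB) IH (tmap I IB f id) id w) = tmap (tidx I IH) IB (tmap I IH f id) id (Psi I a w)"
proof -
  have lf: "lin_on I J f" using f by (simp add: is_hom_def)
  have fI: "finite I" "finite J" using oa ob by (auto simp: obj_fin)
  show ?thesis
  proof (rule ext_lin3[OF fI(1) finB finH _ _ _ w])
    show "lin_on (tidx (tidx I IB) IH) (tidx (tidx J IH) IB) (\<lambda>w. Psi J b (tmap (tidx I IB) IH (tmap I IB f id) id w))"
      by (intro lPsiL lin_basic lf)
    show "lin_on (tidx (tidx I IB) IH) (tidx (tidx J IH) IB) (\<lambda>w. tmap (tidx I IH) IB (tmap I IH f id) id (Psi I a w))"
      by (intro lin_tmapL lPsi lin_tmap lf lin_id)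
    fix i j k assume ijk: "i \<in> I" "j \<in> IB" "k \<in> IH"
    have fi: "f (bv i) \<in> space J" using lf ijk by (simp add: lin_onD)
    have lnf: "linear_on I f" by (rule lin_on_linear[OF lf])
    have "assocL (tvec (f (bv i)) (tmap IH IB id id (Phi (tvec (bv j) (bv k)))))
       = tmap (tidx I IH) IB (tmap I IH f id) id (assocL (tvec (bv i) (Phi (tvec (bv j) (bv k)))))"
      by (rule aL_nat1[where I'=J and J'=IH and K'=IB]) (use ijk fI lf in \<open>simp_all add: lin_idL\<close>)
    moreover have "tmap IH IB id id (Phi (tvec (bv j) (bv k))) = Phi (tvec (bv j) (bv k))"
      by (rule tmap_id) (use ijk in simp_all)
    ultimately show "Psi J b (tmap (tidx I IB) IH (tmap I IB f id) id (tvec (tvec (bv i) (bv j)) (bv k))) =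
          tmap (tidx I IH) IB (tmap I IH f id) id (Psi I a (tvec (tvec (bv i) (bv j)) (bv k)))"
      using ijk fI fi lnf by simp
  qed
qed

end

context Setup
begin

lemma axioms_all:
  assumes oX: "is_obj I a"
    and K1: "\<forall>b\<in>space IB. \<forall>h\<in>space IH. K1L (tvec b h) = K1R (tvec b h)"
    and K2: "\<forall>b\<in>space IB. \<forall>h\<in>space IH. K2L (tvec b h) = K2R (tvec b h)"
    and K3: "\<forall>b\<in>space IB. \<forall>h\<in>space IH. CH (Phi (tvec b h)) = smul (eH h) (gB b)"
    and K4: "\<forall>b\<in>space IB. \<forall>h\<in>space IH. gH (CB (Phi (tvec b h))) = smul (eB b) h"
    and w: "w \<in> space (tidx (tidx I IB) IH)"
  shows "tmap (tidx (tidx I IB) IH) IB (Psi I a) id (Psi (tidx I IB) (tmap I IB a aB) (tmap (tidx I IB) IH (ccomult IB aB DB I a) id w))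
           = ccomult IB aB DB (tidx I IH) (tmap I IH a aH) (Psi I a w)
       \<and> Psi (tidx I IH) (tmap I IH a aH) (tmap (tidx (tidx I IB) IH) IH (Psi I a) id (ccomult IH aH DH (tidx I IB) (tmap I IB a aB) w))
           = tmap (tidx I IH) IB (ccomult IH aH DH I a) id (Psi I a w)
       \<and> tmap (tidx I IH) IB (ccounit IH eH I a) id (Psi I a w) = ccounit IH eH (tidx I IB) (tmap I IB a aB) w
       \<and> ccounit IB eB (tidx I IH) (tmap I IH a aH) (Psi I a w) = tmap (tidx I IB) IH (ccounit IB eB I a) id w"
proof -
  have fI: "finite I" by (rule finX[OF oX])
  have la: "lin_on I I a" by (rule laX[OF oX])
  show ?thesis
  proof (intro conjI)
    show "tmap (tidx (tidx I IB) IH) IB (Psi I a) id (Psi (tidx I IB) (tmap I IB a aB) (tmap (tidx I IB) IH (ccomult IB aB DB I a) id w))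
           = ccomult IB aB DB (tidx I IH) (tmap I IH a aH) (Psi I a w)"
    proof (rule ext_lin3[OF fI finB finH _ _ _ w])
      show "lin_on (tidx (tidx I IB) IH) (tidx (tidx (tidx I IH) IB) IB) (\<lambda>w. tmap (tidx (tidx I IB) IH) IB (Psi I a) id (Psi (tidx I IB) (tmap I IB a aB) (tmap (tidx I IB) IH (ccomult IB aB DB I a) id w)))"
        by (intro lin_tmapL lPsiL lin_tmap lin_idL lcomB[OF oX] lin_id lPsi)
      show "lin_on (tidx (tidx I IB) IH) (tidx (tidx (tidx I IH) IB) IB) (\<lambda>w. ccomult IB aB DB (tidx I IH) (tmap I IH a aH) (Psi I a w))"
        by (rule lin_appL[OF lPsi lcomB_XH[OF oX]])
      fix i j k assume ijk: "i \<in> I" "j \<in> IB" "k \<in> IH"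
      have k: "K1L (tvec (bv j) (bv k)) = K1R (tvec (bv j) (bv k))" using K1 ijk by simp
      show "tmap (tidx (tidx I IB) IH) IB (Psi I a) id (Psi (tidx I IB) (tmap I IB a aB) (tmap (tidx I IB) IH (ccomult IB aB DB I a) id (tvec (tvec (bv i) (bv j)) (bv k))))
           = ccomult IB aB DB (tidx I IH) (tmap I IH a aH) (Psi I a (tvec (tvec (bv i) (bv j)) (bv k)))"
        using ax1_L[OF oX, of "bv i" "bv j" "bv k"] ax1_R[OF oX, of "bv i" "bv j" "bv k"] ijk k by simp
    qed
    show "Psi (tidx I IH) (tmap I IH a aH) (tmap (tidx (tidx I IB) IH) IH (Psi I a) id (ccomult IH aH DH (tidx I IB) (tmap I IB a aB) w))
           = tmap (tidx I IH) IB (ccomult IH aH DH I a) id (Psi I a w)"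
    proof (rule ext_lin3[OF fI finB finH _ _ _ w])
      show "lin_on (tidx (tidx I IB) IH) (tidx (tidx (tidx I IH) IH) IB) (\<lambda>w. Psi (tidx I IH) (tmap I IH a aH) (tmap (tidx (tidx I IB) IH) IH (Psi I a) id (ccomult IH aH DH (tidx I IB) (tmap I IB a aB) w)))"
        by (intro lPsiL lin_tmapL lcomH_XB[OF oX] lPsi lin_id)
      show "lin_on (tidx (tidx I IB) IH) (tidx (tidx (tidx I IH) IH) IB) (\<lambda>w. tmap (tidx I IH) IB (ccomult IH aH DH I a) id (Psi I a w))"
        by (intro lin_tmapL lPsi lcomH[OF oX] lin_id)
      fix i j k assume ijk: "i \<in> I" "j \<in> IB" "k \<in> IH"
      have k: "K2L (tvec (bv j) (bv k)) = K2R (tvec (bv j) (bv k))" using K2 ijk by simp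
      show "Psi (tidx I IH) (tmap I IH a aH) (tmap (tidx (tidx I IB) IH) IH (Psi I a) id (ccomult IH aH DH (tidx I IB) (tmap I IB a aB) (tvec (tvec (bv i) (bv j)) (bv k))))
           = tmap (tidx I IH) IB (ccomult IH aH DH I a) id (Psi I a (tvec (tvec (bv i) (bv j)) (bv k)))"
        using ax2_L[OF oX, of "bv i" "bv j" "bv k"] ax2_R[OF oX, of "bv i" "bv j" "bv k"] ijk k by simp
    qed
    show "tmap (tidx I IH) IB (ccounit IH eH I a) id (Psi I a w) = ccounit IH eH (tidx I IB) (tmap I IB a aB) w"
    proof (rule ext_lin3[OF fI finB finH _ _ _ w])
      show "lin_on (tidx (tidx I IB) IH) (tidx I IB) (\<lambda>w. tmap (tidx I IH) IB (ccounit IH eH I a) id (Psi I a w))"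
        by (intro lin_tmapL lPsi lin_ccounit[OF oX] lin_id)
      show "lin_on (tidx (tidx I IB) IH) (tidx I IB) (ccounit IH eH (tidx I IB) (tmap I IB a aB))"
        by (rule lin_ccounit[OF obj_tmap(1)[OF oX oB]])
      fix i j k assume ijk: "i \<in> I" "j \<in> IB" "k \<in> IH"
      have k: "CH (Phi (tvec (bv j) (bv k))) = smul (eH (bv k)) (gB (bv j))" using K3 ijk by simp
      show "tmap (tidx I IH) IB (ccounit IH eH I a) id (Psi I a (tvec (tvec (bv i) (bv j)) (bv k)))
           = ccounit IH eH (tidx I IB) (tmap I IB a aB) (tvec (tvec (bv i) (bv j)) (bv k))"
        using ax3_L[OF oX, of "bv i" "bv j" "bv k"] ax3_R[OF oX, of "bv i" "bv j" "bv k"] ijk k by simp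
    qed
    show "ccounit IB eB (tidx I IH) (tmap I IH a aH) (Psi I a w) = tmap (tidx I IB) IH (ccounit IB eB I a) id w"
    proof (rule ext_lin3[OF fI finB finH _ _ _ w])
      show "lin_on (tidx (tidx I IB) IH) (tidx I IH) (\<lambda>w. ccounit IB eB (tidx I IH) (tmap I IH a aH) (Psi I a w))"
        by (rule lin_appL[OF lPsi lin_ccounit[OF obj_tmap(1)[OF oX oH]]])
      show "lin_on (tidx (tidx I IB) IH) (tidx I IH) (tmap (tidx I IB) IH (ccounit IB eB I a) id)"
        by (rule lin_tmap[OF lin_ccounit[OF oX] lin_id])
      fix i j k assume ijk: "i \<in> I" "j \<in> IB" "k \<in> IH"
      have k: "gH (CB (Phi (tvec (bv j) (bv k)))) = smul (eB (bv j)) (bv k)" using K4 ijk by simp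
      show "ccounit IB eB (tidx I IH) (tmap I IH a aH) (Psi I a (tvec (tvec (bv i) (bv j)) (bv k)))
           = tmap (tidx I IB) IH (ccounit IB eB I a) id (tvec (tvec (bv i) (bv j)) (bv k))"
        using ax4_L[OF oX, of "bv i" "bv j" "bv k"] ax4_R[OF oX, of "bv i" "bv j" "bv k"] ijk k by simp
    qed
  qed
qed

lemma conv_part:
  assumes D: "distr_law IH aH DH eH IB aB DB eB (psi_n IB aB IH aH phi n)"
  shows "(\<forall>b\<in>space IB. \<forall>h\<in>space IH. K1L (tvec b h) = K1R (tvec b h))
       \<and> (\<forall>b\<in>space IB. \<forall>h\<in>space IH. K2L (tvec b h) = K2R (tvec b h))
       \<and> (\<forall>b\<in>space IB. \<forall>h\<in>space IH. CH (Phi (tvec b h)) = smul (eH h) (gB b))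
       \<and> (\<forall>b\<in>space IB. \<forall>h\<in>space IH. gH (CB (Phi (tvec b h))) = smul (eB b) h)"
proof -
  let ?I = "{Ix 0}" and ?e = "bv (Ix 0) :: 'k vec"
  let ?a = "id :: 'k vec \<Rightarrow> 'k vec"
  have o0: "is_obj ?I ?a" by (rule obj0)
  have e0: "?e \<in> space ?I" by simp
  have A: "\<forall>w\<in>space (tidx (tidx ?I IB) IH).
      tmap (tidx (tidx ?I IB) IH) IB (Psi ?I ?a) id (Psi (tidx ?I IB) (tmap ?I IB ?a aB) (tmap (tidx ?I IB) IH (ccomult IB aB DB ?I ?a) id w))
           = ccomult IB aB DB (tidx ?I IH) (tmap ?I IH ?a aH) (Psi ?I ?a w)
       \<and> Psi (tidx ?I IH) (tmap ?I IH ?a aH) (tmap (tidx (tidx ?I IB) IH) IH (Psi ?I ?a) id (ccomult IH aH DH (tidx ?I IB) (tmap ?I IB ?a aB) w))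
           = tmap (tidx ?I IH) IB (ccomult IH aH DH ?I ?a) id (Psi ?I ?a w)
       \<and> tmap (tidx ?I IH) IB (ccounit IH eH ?I ?a) id (Psi ?I ?a w) = ccounit IH eH (tidx ?I IB) (tmap ?I IB ?a aB) w
       \<and> ccounit IB eB (tidx ?I IH) (tmap ?I IH ?a aH) (Psi ?I ?a w) = tmap (tidx ?I IB) IH (ccounit IB eB ?I ?a) id w"
    using D o0 unfolding distr_law_def Let_def by blast
  have AA: "tmap (tidx (tidx ?I IB) IH) IB (Psi ?I ?a) id (Psi (tidx ?I IB) (tmap ?I IB ?a aB) (tmap (tidx ?I IB) IH (ccomult IB aB DB ?I ?a) id (tvec (tvec ?e b) h)))
           = ccomult IB aB DB (tidx ?I IH) (tmap ?I IH ?a aH) (Psi ?I ?a (tvec (tvec ?e b) h))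
       \<and> Psi (tidx ?I IH) (tmap ?I IH ?a aH) (tmap (tidx (tidx ?I IB) IH) IH (Psi ?I ?a) id (ccomult IH aH DH (tidx ?I IB) (tmap ?I IB ?a aB) (tvec (tvec ?e b) h)))
           = tmap (tidx ?I IH) IB (ccomult IH aH DH ?I ?a) id (Psi ?I ?a (tvec (tvec ?e b) h))
       \<and> tmap (tidx ?I IH) IB (ccounit IH eH ?I ?a) id (Psi ?I ?a (tvec (tvec ?e b) h)) = ccounit IH eH (tidx ?I IB) (tmap ?I IB ?a aB) (tvec (tvec ?e b) h)
       \<and> ccounit IB eB (tidx ?I IH) (tmap ?I IH ?a aH) (Psi ?I ?a (tvec (tvec ?e b) h)) = tmap (tidx ?I IB) IH (ccounit IB eB ?I ?a) id (tvec (tvec ?e b) h)"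
    if b: "b \<in> space IB" and h: "h \<in> space IH" for b h
  proof -
    have "tvec (tvec ?e b) h \<in> space (tidx (tidx ?I IB) IH)" using b h e0 by simp
    then show ?thesis using A by blast
  qed
  show ?thesis
  proof (intro conjI ballI)
    fix b h :: "'k vec" assume b: "b \<in> space IB" and h: "h \<in> space IH"
    have c1: "Rf ?I IH IB IB ?e (K1L (tvec b h)) = Rf ?I IH IB IB ?e (K1R (tvec b h))"
      using AA[OF b h] ax1_L[OF o0 e0 b h] ax1_R[OF o0 e0 b h] by simp
    show "K1L (tvec b h) = K1R (tvec b h)"
      by (rule Rf_inj[OF finH finB finB _ _ c1]) (use b h in simp_all)
  next
    fix b h :: "'k vec" assume b: "b \<in> space IB" and h: "h \<in> space IH"
    have c2: "Rf ?I IH IH IB ?e (K2L (tvec b h)) = Rf ?I IH IH IB ?e (K2R (tvec b h))"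
      using AA[OF b h] ax2_L[OF o0 e0 b h] ax2_R[OF o0 e0 b h] by simp
    show "K2L (tvec b h) = K2R (tvec b h)"
      by (rule Rf_inj[OF finH finH finB _ _ c2]) (use b h in simp_all)
  next
    fix b h :: "'k vec" assume b: "b \<in> space IB" and h: "h \<in> space IH"
    have "tvec ?e (CH (Phi (tvec b h))) = tvec ?e (smul (eH h) (gB b))"
      using AA[OF b h] ax3_L[OF o0 e0 b h] ax3_R[OF o0 e0 b h] by (simp add: g0)
    then show "CH (Phi (tvec b h)) = smul (eH h) (gB b)" by (rule tvec_inj0)
  next
    fix b h :: "'k vec" assume b: "b \<in> space IB" and h: "h \<in> space IH"
    have "tvec ?e (gH (CB (Phi (tvec b h)))) = tvec ?e (smul (eB b) h)"
      using AA[OF b h] ax4_L[OF o0 e0 b h] ax4_R[OF o0 e0 b h] by (simp add: g0)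
    then show "gH (CB (Phi (tvec b h))) = smul (eB b) h" by (rule tvec_inj0)
  qed
qed

theorem main:
  "distr_law IH aH DH eH IB aB DB eB (psi_n IB aB IH aH phi n) \<longleftrightarrow>
     (\<forall>b\<in>space IB. \<forall>h\<in>space IH.
        tmap (tidx IB IH) IB phi id
           (assocL (tmap IB (tidx IB IH) id phi (assocR (tvec (DB b) (aH h)))))
          = assocL (tmap IH IB aH DB (phi (tvec b h)))
      \<and> assocL (tmap IH (tidx IB IH) id phi
           (assocR (tmap (tidx IB IH) IH phi id (assocL (tvec (aB b) (DH h))))))
          = tmap IH IB DH aB (phi (tvec b h))
      \<and> lin2 IH IB (\<lambda>y x. smul (eH y) x) (phi (tvec b h)) = smul (eH h) b
      \<and> lin2 IH IB (\<lambda>y x. smul (eB x) y) (phi (tvec b h)) = smul (eB b) h)"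
  (is "?D \<longleftrightarrow> ?R")
proof -
  have R: "?R \<longleftrightarrow> (\<forall>b\<in>space IB. \<forall>h\<in>space IH. M1L b h = M1R b h)
       \<and> (\<forall>b\<in>space IB. \<forall>h\<in>space IH. M2L b h = M2R b h)
       \<and> (\<forall>b\<in>space IB. \<forall>h\<in>space IH. lin2 IH IB (\<lambda>y x. smul (eH y) x) (phi (tvec b h)) = smul (eH h) b)
       \<and> (\<forall>b\<in>space IB. \<forall>h\<in>space IH. lin2 IH IB (\<lambda>y x. smul (eB x) y) (phi (tvec b h)) = smul (eB b) h)"
    unfolding M1L_def M1R_def M2L_def M2R_def by blast
  show ?thesis
  proof
    assume D: ?D
    show ?R using conv_part[OF D] K1_iff K2_iff K3_iff K4_iff R by blast
  next
    assume r: ?R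
    have K1: "\<forall>b\<in>space IB. \<forall>h\<in>space IH. K1L (tvec b h) = K1R (tvec b h)" using r R K1_iff by blast
    have K2: "\<forall>b\<in>space IB. \<forall>h\<in>space IH. K2L (tvec b h) = K2R (tvec b h)" using r R K2_iff by blast
    have K3: "\<forall>b\<in>space IB. \<forall>h\<in>space IH. CH (Phi (tvec b h)) = smul (eH h) (gB b)" using r R K3_iff by blast
    have K4: "\<forall>b\<in>space IB. \<forall>h\<in>space IH. gH (CB (Phi (tvec b h))) = smul (eB b) h" using r R K4_iff by blast
    show ?D
      unfolding distr_law_def Let_def
    proof (intro conjI allI impI ballI)
      fix I a assume oX: "is_obj I (a :: 'k vec \<Rightarrow> 'k vec)"
      show "is_hom (tidx (tidx I IB) IH) (tmap (tidx I IB) IH (tmap I IB a aB) aH)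
          (tidx (tidx I IH) IB) (tmap (tidx I IH) IB (tmap I IH a aH) aB) (Psi I a)"
        by (rule hom_part[OF oX])
    next
      fix I J :: "ix set" and a b f :: "'k vec \<Rightarrow> 'k vec" and w :: "'k vec" assume "is_obj I (a :: 'k vec \<Rightarrow> 'k vec)" "is_obj J b" "is_hom I a J b f"
        "w \<in> space (tidx (tidx I IB) IH)"
      then show "Psi J b (tmap (tidx I IB) IH (tmap I IB f id) id w) = tmap (tidx I IH) IB (tmap I IH f id) id (Psi I a w)"
        by (rule nat_part)
    next
      fix I :: "ix set" and a :: "'k vec \<Rightarrow> 'k vec" and w :: "'k vec" assume oX: "is_obj I (a :: 'k vec \<Rightarrow> 'k vec)" and w: "w \<in> space (tidx (tidx I IB) IH)"
      note ax = axioms_all[OF oX K1 K2 K3 K4 w]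
      show "tmap (tidx (tidx I IB) IH) IB (Psi I a) id (Psi (tidx I IB) (tmap I IB a aB) (tmap (tidx I IB) IH (ccomult IB aB DB I a) id w))
           = ccomult IB aB DB (tidx I IH) (tmap I IH a aH) (Psi I a w)" using ax by blast
      show "Psi (tidx I IH) (tmap I IH a aH) (tmap (tidx (tidx I IB) IH) IH (Psi I a) id (ccomult IH aH DH (tidx I IB) (tmap I IB a aB) w))
           = tmap (tidx I IH) IB (ccomult IH aH DH I a) id (Psi I a w)" using ax by blast
      show "tmap (tidx I IH) IB (ccounit IH eH I a) id (Psi I a w) = ccounit IH eH (tidx I IB) (tmap I IB a aB) w" using ax by blast
      show "ccounit IB eB (tidx I IH) (tmap I IH a aH) (Psi I a w) = tmap (tidx I IB) IH (ccounit IB eB I a) id w" using ax by blast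
    qed
  qed
qed

end

theorem proposition4p4:
  fixes IB IH :: "ix set"
    and aB DB aH DH :: "('k::field_char_0) vec \<Rightarrow> 'k vec"
    and eB eH :: "'k vec \<Rightarrow> 'k"
    and phi :: "'k vec \<Rightarrow> 'k vec"
    and n :: int
  assumes "hom_coalgebra IB aB DB eB"
    and "hom_coalgebra IH aH DH eH"
    and "lin_on (tidx IB IH) (tidx IH IB) phi"
    and "\<forall>w\<in>space (tidx IB IH). phi (tmap IB IH aB aH w) = tmap IH IB aH aB (phi w)"
  shows "distr_law IH aH DH eH IB aB DB eB (psi_n IB aB IH aH phi n) \<longleftrightarrow>
     (\<forall>b\<in>space IB. \<forall>h\<in>space IH.
        tmap (tidx IB IH) IB phi id
           (assocL (tmap IB (tidx IB IH) id phi (assocR (tvec (DB b) (aH h)))))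
          = assocL (tmap IH IB aH DB (phi (tvec b h)))
      \<and> assocL (tmap IH (tidx IB IH) id phi
           (assocR (tmap (tidx IB IH) IH phi id (assocL (tvec (aB b) (DH h))))))
          = tmap IH IB DH aB (phi (tvec b h))
      \<and> lin2 IH IB (\<lambda>y x. smul (eH y) x) (phi (tvec b h)) = smul (eH h) b
      \<and> lin2 IH IB (\<lambda>y x. smul (eB x) y) (phi (tvec b h)) = smul (eB b) h)"
  proof -
  interpret Setup IB IH aB DB aH DH eB eH phi n
    using assms by (unfold_locales) auto
  show ?thesis by (rule main)
qed

end
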